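(* Let $\mathbb{F}$ be a field and $\mu$ a partition of $n$. The Demazure operators $\pi_1,\dots,\pi_{n-1}$ preserve the ideal $I_\mu\subseteq\mathbb{F}[x_1,\dots,x_n]$ (i.e. $\pi_i(I_\mu)\subseteq I_\mu$ for all $i$) if and only if $\mu$ is a hook.
   Context: Demazure operators: $\pi_if=\frac{x_if-x_{i+1}s_i(f)}{x_i-x_{i+1}}$, where $s_i$ swaps $x_i,x_{i+1}$. Write partitions of $n$ increasingly with $n$ parts, $\mu=(0\le\mu_1\le\dots\le\mu_n)$, and let $\mu'=(0\le\mu'_1\le\dots\le\mu'_n)$ be the conjugate partition. Put $d_k(\mu)=\mu'_1+\dots+\mu'_k$ for $k=1,\dots,n$. The (Tanisaki) ideal $I_\mu$ is generated by all $e_r(S)$ with $S\subseteq\{x_1,\dots,x_n\}$, $|S|=k$, and $k\ge r>k-d_k(\mu)$, where $e_r(S)$ is the $r$-th elementary symmetric polynomial in the variables of $S$. $\mu$ is a hook if it has the form $(0^{n-h},1^{h-1},n-h+1)$. *)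

theory Defs
  imports "HOL-Library.Poly_Mapping"
begin

text \<open>Multivariate polynomials over a coefficient ring 'a: finitely supported maps
  from monomials.
  Variable x_k is indexed by k; we use the variables x_1, ..., x_n.\<close>

type_synonym 'a mpoly = "(nat \<Rightarrow>\<^sub>0 nat) \<Rightarrow>\<^sub>0 'a"

definition var :: "nat \<Rightarrow> 'a::comm_ring_1 mpoly" where
  "var k = Poly_Mapping.single (Poly_Mapping.single k 1) 1"

definition polys_in :: "nat \<Rightarrow> 'a::comm_ring_1 mpoly set" where
  "polys_in n = {p. \<forall>m \<in> Poly_Mapping.keys p. Poly_Mapping.keys m \<subseteq> {1..n}}"

definition swap_idx :: "nat \<Rightarrow> nat \<Rightarrow> nat \<Rightarrow> nat" where
  "swap_idx i j k = (if k = i then j else if k = j then i else k)"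

definition swap_var :: "nat \<Rightarrow> 'a::comm_ring_1 mpoly \<Rightarrow> 'a mpoly" where
  "swap_var i f = Poly_Mapping.map_key (\<lambda>m. Poly_Mapping.map_key (swap_idx i (i+1)) m) f"

definition demazure :: "nat \<Rightarrow> 'a::field mpoly \<Rightarrow> 'a mpoly" where
  "demazure i f = (THE g. (var i - var (i+1)) * g = var i * f - var (i+1) * swap_var i f)"

definition esym :: "nat \<Rightarrow> nat set \<Rightarrow> 'a::comm_ring_1 mpoly" where
  "esym r S = (\<Sum>T \<in> {T. T \<subseteq> S \<and> card T = r}. \<Prod>k\<in>T. var k)"

text \<open>Partitions of n with n parts, written increasingly: mu ! (i-1) = mu_i.\<close>
definition is_partition :: "nat \<Rightarrow> nat list \<Rightarrow> bool" where
  "is_partition n mu \<longleftrightarrow> length mu = n \<and> sorted mu \<and> sum_list mu = n"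

text \<open>Conjugate partition, written increasingly with n parts: mu'_k = #{i. mu_i \<ge> n+1-k}.\<close>
definition conj_part :: "nat \<Rightarrow> nat list \<Rightarrow> nat \<Rightarrow> nat" where
  "conj_part n mu k = card {i \<in> {1..n}. mu ! (i - 1) \<ge> n + 1 - k}"

definition dk :: "nat \<Rightarrow> nat list \<Rightarrow> nat \<Rightarrow> nat" where
  "dk n mu k = (\<Sum>j = 1..k. conj_part n mu j)"

definition tanisaki_gens :: "nat \<Rightarrow> nat list \<Rightarrow> 'a::comm_ring_1 mpoly set" where
  "tanisaki_gens n mu = {esym r S | r S. S \<subseteq> {1..n} \<and> 1 \<le> card S \<and>
      r \<le> card S \<and> card S < r + dk n mu (card S)}"

definition ideal_in :: "nat \<Rightarrow> 'a::comm_ring_1 mpoly set \<Rightarrow> 'a mpoly set" where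
  "ideal_in n G = {(\<Sum>g\<in>H. c g * g) | H c. finite H \<and> H \<subseteq> G \<and> (\<forall>g\<in>H. c g \<in> polys_in n)}"

definition tanisaki_ideal :: "nat \<Rightarrow> nat list \<Rightarrow> 'a::comm_ring_1 mpoly set" where
  "tanisaki_ideal n mu = ideal_in n (tanisaki_gens n mu)"

definition is_hook :: "nat \<Rightarrow> nat list \<Rightarrow> bool" where
  "is_hook n mu \<longleftrightarrow> (\<exists>h. 1 \<le> h \<and> h \<le> n \<and>
      mu = replicate (n - h) 0 @ replicate (h - 1) 1 @ [n - h + 1])"

end

theory Submission
  imports Defs
begin


abbreviation lk :: "('a \<Rightarrow>\<^sub>0 'b::zero) \<Rightarrow> 'a \<Rightarrow> 'b" where "lk \<equiv> Poly_Mapping.lookup"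

definition mon :: "(nat \<Rightarrow>\<^sub>0 nat) \<Rightarrow> 'a::comm_ring_1 mpoly" where
  "mon m = Poly_Mapping.single m 1"

lemma var_mon: "var k = mon (Poly_Mapping.single k 1)" by (simp add: var_def mon_def)

lemma mon_mult: "mon a * mon b = (mon (a + b) :: 'a::comm_ring_1 mpoly)"
  by (simp add: mon_def mult_single)

lemma mon_0: "mon 0 = (1 :: 'a::comm_ring_1 mpoly)"
  by (simp add: mon_def)

lemma var_power: "(var k :: 'a::comm_ring_1 mpoly) ^ p = mon (Poly_Mapping.single k p)"
proof (induction p)
  case 0 then show ?case by (simp add: mon_0)
next
  case (Suc p) then show ?case
    by (simp add: var_mon mon_mult single_add[symmetric] add.commute)
qed

lemma poly_expand: "p = (\<Sum>m\<in>Poly_Mapping.keys p. Poly_Mapping.single m (lk p m))"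
  by (rule poly_mapping_eqI) (simp add: lookup_sum lookup_single when_def in_keys_iff sum.delta' split: if_splits)

lemma swap_idx_invol [simp]: "swap_idx i j (swap_idx i j k) = k"
  by (simp add: swap_idx_def)

lemma inj_swap_idx: "inj (swap_idx i j)"
  by (metis injI swap_idx_invol)

definition sw :: "nat \<Rightarrow> (nat \<Rightarrow>\<^sub>0 nat) \<Rightarrow> (nat \<Rightarrow>\<^sub>0 nat)" where
  "sw i m = Poly_Mapping.map_key (swap_idx i (i+1)) m"

lemma lookup_sw: "lk (sw i m) k = lk m (swap_idx i (i+1) k)"
  by (simp add: sw_def map_key.rep_eq[OF inj_swap_idx])

lemma sw_sw [simp]: "sw i (sw i m) = m"
  by (rule poly_mapping_eqI) (simp add: lookup_sw)

lemma inj_sw: "inj (sw i)"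
  by (metis injI sw_sw)

lemma sw_add: "sw i (a + b) = sw i a + sw i b"
  by (rule poly_mapping_eqI) (simp add: lookup_sw lookup_add)

lemma swap_var_eq: "swap_var i f = Poly_Mapping.map_key (sw i) f"
  by (simp add: swap_var_def sw_def[abs_def])

lemma lookup_swap_var: "lk (swap_var i f) m = lk f (sw i m)"
  by (simp add: swap_var_eq map_key.rep_eq[OF inj_sw])

lemma swap_var_add: "swap_var i (f + g) = swap_var i f + swap_var i g"
  by (rule poly_mapping_eqI) (simp add: lookup_swap_var lookup_add)

lemma swap_var_diff: "swap_var i (f - g) = swap_var i f - (swap_var i g :: 'a::comm_ring_1 mpoly)"
  by (rule poly_mapping_eqI) (simp add: lookup_swap_var lookup_minus)

lemma swap_var_uminus: "swap_var i (- f) = - (swap_var i f :: 'a::comm_ring_1 mpoly)"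
  by (rule poly_mapping_eqI) (simp add: lookup_swap_var)

lemma swap_var_sum: "swap_var i (sum F A) = (\<Sum>x\<in>A. swap_var i (F x))"
  by (rule poly_mapping_eqI) (simp add: lookup_swap_var lookup_sum)

lemma swap_var_single: "swap_var i (Poly_Mapping.single m c) = Poly_Mapping.single (sw i m) c"
  by (rule poly_mapping_eqI) (simp add: lookup_swap_var lookup_single when_def, metis sw_sw)

lemma swap_var_mult: "swap_var i (f * g) = swap_var i f * (swap_var i g :: 'a::comm_ring_1 mpoly)"
proof -
  have e: "f * g = (\<Sum>a\<in>Poly_Mapping.keys f. \<Sum>b\<in>Poly_Mapping.keys g.
      Poly_Mapping.single a (lk f a) * Poly_Mapping.single b (lk g b))"
    by (subst poly_expand[of f], subst poly_expand[of g]) (simp add: sum_product)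
  have "swap_var i f * swap_var i g = (\<Sum>a\<in>Poly_Mapping.keys f. \<Sum>b\<in>Poly_Mapping.keys g.
      Poly_Mapping.single (sw i a) (lk f a) * Poly_Mapping.single (sw i b) (lk g b))"
    by (subst poly_expand[of f], subst poly_expand[of g]) (simp add: sum_product swap_var_sum swap_var_single)
  then show ?thesis using e
    by (simp add: swap_var_sum mult_single swap_var_single sw_add)
qed

lemma swap_var_mon: "swap_var i (mon m) = mon (sw i m)"
  by (simp add: mon_def swap_var_single)

lemma swap_var_swap_var [simp]: "swap_var i (swap_var i f) = f"
  by (rule poly_mapping_eqI) (simp add: lookup_swap_var)

lemma swap_var_one [simp]: "swap_var i 1 = (1 :: 'a::comm_ring_1 mpoly)"
proof -
  have "sw i 0 = 0" by (rule poly_mapping_eqI) (simp add: lookup_sw)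
  then show ?thesis using swap_var_mon[of i 0] by (simp add: mon_0)
qed

lemma sw_single: "sw i (Poly_Mapping.single k p) = Poly_Mapping.single (swap_idx i (i+1) k) p"
  by (rule poly_mapping_eqI) (simp add: lookup_sw lookup_single when_def, metis swap_idx_invol)

lemma swap_var_var: "swap_var i (var k) = (var (swap_idx i (i+1) k) :: 'a::comm_ring_1 mpoly)"
  by (simp add: var_mon swap_var_mon sw_single)

lemma swap_var_power: "swap_var i (f ^ p) = (swap_var i f :: 'a::comm_ring_1 mpoly) ^ p"
  by (induction p) (simp_all add: swap_var_mult)



definition wb :: "nat \<Rightarrow> (nat \<Rightarrow>\<^sub>0 nat) \<Rightarrow> (nat \<Rightarrow>\<^sub>0 nat)" where
  "wb i m = Poly_Mapping.update i 0 (Poly_Mapping.update (i+1) 0 m)"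

lemma lk_wb: "lk (wb i m) k = (if k = i \<or> k = i+1 then 0 else lk m k)"
  by (simp add: wb_def lookup_update)

lemma m_decomp: "m = wb i m + Poly_Mapping.single i (lk m i) + Poly_Mapping.single (i+1) (lk m (i+1))"
  by (rule poly_mapping_eqI) (simp add: lk_wb lookup_add lookup_single when_def)

lemma sw_decomp: "sw i m = wb i m + Poly_Mapping.single i (lk m (i+1)) + Poly_Mapping.single (i+1) (lk m i)"
  by (rule poly_mapping_eqI) (simp add: lk_wb lookup_add lookup_single when_def lookup_sw swap_idx_def)

lemma mon_decomp: "(mon m :: 'a::comm_ring_1 mpoly) = mon (wb i m) * var i ^ lk m i * var (i+1) ^ lk m (i+1)"
  by (subst m_decomp[of m i]) (simp add: var_power mon_mult)

lemma mon_sw_decomp: "(mon (sw i m) :: 'a::comm_ring_1 mpoly) = mon (wb i m) * var i ^ lk m (i+1) * var (i+1) ^ lk m i"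
  by (subst sw_decomp[of i m]) (simp add: var_power mon_mult)

definition wmon :: "nat \<Rightarrow> (nat \<Rightarrow>\<^sub>0 nat) \<Rightarrow> nat \<Rightarrow> nat \<Rightarrow> (nat \<Rightarrow>\<^sub>0 nat)" where
  "wmon i m p q = wb i m + Poly_Mapping.single i p + Poly_Mapping.single (i+1) q"

lemma wmon_id: "wmon i m (lk m i) (lk m (Suc i)) = m"
  unfolding wmon_def Suc_eq_plus1 by (rule m_decomp[symmetric])

lemma wmon_sw: "wmon i m (lk m (Suc i)) (lk m i) = sw i m"
  unfolding wmon_def Suc_eq_plus1 by (rule sw_decomp[symmetric])

lemma var_wmon1: "(var i :: 'a::comm_ring_1 mpoly) * mon (wmon i m p q) = mon (wmon i m (Suc p) q)"
  unfolding var_mon mon_mult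
  by (rule arg_cong[where f=mon], rule poly_mapping_eqI) (simp add: wmon_def lookup_add lookup_single when_def)

lemma var_wmon2: "(var (Suc i) :: 'a::comm_ring_1 mpoly) * mon (wmon i m p q) = mon (wmon i m p (Suc q))"
  unfolding var_mon mon_mult
  by (rule arg_cong[where f=mon], rule poly_mapping_eqI) (simp add: wmon_def lookup_add lookup_single when_def)

definition dd_mon :: "nat \<Rightarrow> (nat \<Rightarrow>\<^sub>0 nat) \<Rightarrow> 'a::comm_ring_1 mpoly" where
  "dd_mon i m = (if lk m (i+1) \<le> lk m i then (\<Sum>t<lk m i - lk m (i+1). mon (wmon i m (lk m (i+1) + t) (lk m i - 1 - t)))
    else - (\<Sum>t<lk m (i+1) - lk m i. mon (wmon i m (lk m i + t) (lk m (i+1) - 1 - t))))"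

lemma tele: 
  assumes "b \<le> a"
  shows "(var i - var (i+1)) * (\<Sum>t<a - b. mon (wmon i m (b + t) (a - 1 - t)))
     = (mon (wmon i m a b) - mon (wmon i m b a) :: 'a::comm_ring_1 mpoly)"
proof -
  define f where "f t = (mon (wmon i m (b + t) (a - t)) :: 'a mpoly)" for t
  have "(var i - var (i+1)) * (\<Sum>t<a - b. mon (wmon i m (b + t) (a - 1 - t)))
     = (\<Sum>t<a - b. f (Suc t) - f t)"
    unfolding sum_distrib_left
  proof (rule sum.cong[OF refl])
    fix t assume "t \<in> {..<a-b}"
    then have t: "t < a - b" by simp
    have "(var i - var (i+1)) * (mon (wmon i m (b + t) (a - 1 - t)) :: 'a mpoly)
       = mon (wmon i m (Suc (b + t)) (a - 1 - t)) - mon (wmon i m (b + t) (Suc (a - 1 - t)))"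
      by (simp add: left_diff_distrib var_wmon1 var_wmon2)
    also have "\<dots> = f (Suc t) - f t"
    proof -
      have e: "Suc (a - 1 - t) = a - t" "a - 1 - t = a - Suc t" "Suc (a - Suc t) = a - t" using t by arith+
      show ?thesis unfolding f_def e by simp
    qed
    finally show "(var i - var (i+1)) * (mon (wmon i m (b + t) (a - 1 - t)) :: 'a mpoly) = f (Suc t) - f t" .
  qed
  also have "\<dots> = f (a - b) - f 0" by (rule sum_lessThan_telescope)
  also have "\<dots> = mon (wmon i m a b) - mon (wmon i m b a)" using assms by (simp add: f_def)
  finally show ?thesis .
qed

lemma dd_mon_char: "(var i - var (Suc i)) * dd_mon i m = mon m - (mon (sw i m) :: 'a::comm_ring_1 mpoly)"
proof (cases "lk m (i+1) \<le> lk m i")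
  case True
  from tele[OF this, of i m] True show ?thesis by (simp add: dd_mon_def wmon_id wmon_sw)
next
  case False
  then have le: "lk m i \<le> lk m (Suc i)" by simp
  have T: "(var i - var (Suc i)) *
     (\<Sum>t<lk m (Suc i) - lk m i. mon (wmon i m (lk m i + t) (lk m (Suc i) - 1 - t)) :: 'a mpoly) = mon (sw i m) - mon m"
    using tele[OF le, of i m] wmon_id[of i m] wmon_sw[of i m] by simp
  have "(var i - var (Suc i)) * dd_mon i m = - ((var i - var (Suc i)) *
     (\<Sum>t<lk m (Suc i) - lk m i. mon (wmon i m (lk m i + t) (lk m (Suc i) - 1 - t)) :: 'a mpoly))"
    using False by (simp add: dd_mon_def)
  then show ?thesis unfolding T by simp
qed

lemma keys_mon: "Poly_Mapping.keys (mon m :: 'a::comm_ring_1 mpoly) \<subseteq> {m}"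
  by (simp add: mon_def)

lemma keys_dd_mon: "Poly_Mapping.keys (dd_mon i m :: 'a::comm_ring_1 mpoly) \<subseteq>
   {wmon i m p q | p q. p + q + 1 = lk m i + lk m (i+1)}"
proof
  fix x assume x: "x \<in> Poly_Mapping.keys (dd_mon i m :: 'a mpoly)"
  show "x \<in> {wmon i m p q | p q. p + q + 1 = lk m i + lk m (i+1)}"
  proof (cases "lk m (i+1) \<le> lk m i")
    case True
    with x have "x \<in> Poly_Mapping.keys (\<Sum>t<lk m i - lk m (i+1). mon (wmon i m (lk m (i+1) + t) (lk m i - 1 - t)) :: 'a mpoly)"
      by (simp add: dd_mon_def)
    then have "x \<in> (\<Union>t\<in>{..<lk m i - lk m (i+1)}. Poly_Mapping.keys (mon (wmon i m (lk m (i+1) + t) (lk m i - 1 - t)) :: 'a mpoly))"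
      by (rule subsetD[OF keys_sum])
    then obtain t where "t < lk m i - lk m (i+1)" "x \<in> Poly_Mapping.keys (mon (wmon i m (lk m (i+1) + t) (lk m i - 1 - t)) :: 'a mpoly)" by blast
    then have "t < lk m i - lk m (i+1)" "x = wmon i m (lk m (i+1) + t) (lk m i - 1 - t)" using keys_mon[of "wmon i m (lk m (i+1) + t) (lk m i - 1 - t)"] by auto
    then show ?thesis by (intro CollectI exI[of _ "lk m (i+1) + t"] exI[of _ "lk m i - 1 - t"]) auto
  next
    case False
    with x have "x \<in> Poly_Mapping.keys (\<Sum>t<lk m (i+1) - lk m i. mon (wmon i m (lk m i + t) (lk m (i+1) - 1 - t)) :: 'a mpoly)"
      by (simp add: dd_mon_def keys_minus)
    then have "x \<in> (\<Union>t\<in>{..<lk m (i+1) - lk m i}. Poly_Mapping.keys (mon (wmon i m (lk m i + t) (lk m (i+1) - 1 - t)) :: 'a mpoly))"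
      by (rule subsetD[OF keys_sum])
    then obtain t where "t < lk m (i+1) - lk m i" "x \<in> Poly_Mapping.keys (mon (wmon i m (lk m i + t) (lk m (i+1) - 1 - t)) :: 'a mpoly)" by blast
    then have "t < lk m (i+1) - lk m i" "x = wmon i m (lk m i + t) (lk m (i+1) - 1 - t)" using keys_mon[of "wmon i m (lk m i + t) (lk m (i+1) - 1 - t)"] by auto
    then show ?thesis by (intro CollectI exI[of _ "lk m i + t"] exI[of _ "lk m (i+1) - 1 - t"]) auto
  qed
qed



definition tdeg :: "(nat \<Rightarrow>\<^sub>0 nat) \<Rightarrow> nat" where "tdeg m = Sum_any (lk m)"

lemma tdeg_add: "tdeg (a + b) = tdeg a + tdeg b"
  unfolding tdeg_def lookup_add by (rule Sum_any.distrib) simp_all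

lemma tdeg_single: "tdeg (Poly_Mapping.single k p) = p"
  unfolding tdeg_def lookup_single by simp

lemma tdeg_0 [simp]: "tdeg 0 = 0"
  unfolding tdeg_def by simp

lemma tdeg_wmon: "tdeg (wmon i m p q) + lk m i + lk m (Suc i) = tdeg m + p + q"
proof -
  have "tdeg m = tdeg (wb i m) + lk m i + lk m (Suc i)"
    by (subst m_decomp[of m i]) (simp add: tdeg_add tdeg_single)
  then show ?thesis by (simp add: wmon_def tdeg_add tdeg_single)
qed

lemma lk_wmon: "k \<noteq> i \<Longrightarrow> k \<noteq> Suc i \<Longrightarrow> lk (wmon i m p q) k = lk m k"
  by (simp add: wmon_def lookup_add lookup_single lk_wb)

definition dd :: "nat \<Rightarrow> 'a::comm_ring_1 mpoly \<Rightarrow> 'a mpoly" where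
  "dd i p = (\<Sum>m\<in>Poly_Mapping.keys p. Poly_Mapping.single 0 (lk p m) * dd_mon i m)"

lemma single0_mon: "Poly_Mapping.single 0 c * mon m = Poly_Mapping.single m (c::'a::comm_ring_1)"
  by (simp add: mon_def mult_single)

lemma dd_char: "(var i - var (Suc i)) * dd i p = p - swap_var i (p :: 'a::comm_ring_1 mpoly)"
proof -
  have "(var i - var (Suc i)) * dd i p =
     (\<Sum>m\<in>Poly_Mapping.keys p. Poly_Mapping.single 0 (lk p m) * ((var i - var (Suc i)) * dd_mon i m))"
    by (simp add: dd_def sum_distrib_left algebra_simps)
  also have "\<dots> = (\<Sum>m\<in>Poly_Mapping.keys p. Poly_Mapping.single m (lk p m) - Poly_Mapping.single (sw i m) (lk p m))"
    by (simp only: dd_mon_char) (simp add: right_diff_distrib single0_mon)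
  also have "\<dots> = p - swap_var i p"
    by (subst (3 4) poly_expand[of p]) (simp add: sum_subtractf swap_var_sum swap_var_single)
  finally show ?thesis .
qed

lemma keys_single0_mult: "Poly_Mapping.keys (Poly_Mapping.single 0 c * q) \<subseteq> Poly_Mapping.keys (q :: 'a::comm_ring_1 mpoly)"
  using keys_mult[of "Poly_Mapping.single 0 c" q] by (auto split: if_splits)

lemma keys_dd:
  assumes "x \<in> Poly_Mapping.keys (dd i (p :: 'a::comm_ring_1 mpoly))"
  shows "\<exists>m\<in>Poly_Mapping.keys p. tdeg m = Suc (tdeg x) \<and> (\<forall>k. k \<noteq> i \<longrightarrow> k \<noteq> Suc i \<longrightarrow> lk x k = lk m k)"
proof -
  have "x \<in> (\<Union>m\<in>Poly_Mapping.keys p. Poly_Mapping.keys (Poly_Mapping.single 0 (lk p m) * (dd_mon i m :: 'a mpoly)))"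
    using assms unfolding dd_def by (rule subsetD[OF keys_sum])
  then obtain m where m1: "m \<in> Poly_Mapping.keys p" and "x \<in> Poly_Mapping.keys (Poly_Mapping.single 0 (lk p m) * (dd_mon i m :: 'a mpoly))"
    by blast
  then have m2: "x \<in> Poly_Mapping.keys (dd_mon i m :: 'a mpoly)" using keys_single0_mult by blast
  have "x \<in> {wmon i m p q | p q. p + q + 1 = lk m i + lk m (i+1)}" using m2 by (rule subsetD[OF keys_dd_mon])
  then obtain a b where x: "x = wmon i m a b" "a + b + 1 = lk m i + lk m (i+1)"
    by blast
  note m = m1 m2
  have "tdeg m = Suc (tdeg x)" using tdeg_wmon[of i m a b] x by simp
  moreover have "\<forall>k. k \<noteq> i \<longrightarrow> k \<noteq> Suc i \<longrightarrow> lk x k = lk m k" using x lk_wmon by simp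
  ultimately show ?thesis using m by blast
qed

lemma single_inj1: "Poly_Mapping.single (k::nat) (1::nat) = Poly_Mapping.single j 1 \<longleftrightarrow> k = j"
  by (metis lookup_single_eq lookup_single_not_eq zero_neq_one)

lemma Xdiff_nz: "(var i - var (Suc i) :: 'a::field mpoly) \<noteq> 0"
proof
  assume "(var i - var (Suc i) :: 'a::field mpoly) = 0"
  then have "lk (var i - var (Suc i) :: 'a mpoly) (Poly_Mapping.single i 1) = 0" by simp
  moreover have "Poly_Mapping.single (Suc i) (1::nat) \<noteq> Poly_Mapping.single i 1"
    by (metis lookup_single_eq lookup_single_not_eq n_not_Suc_n zero_neq_one)
  ultimately show False by (simp add: lookup_minus var_def lookup_single when_def)
qed

lemma cancelX: "(var i - var (Suc i)) * a = (var i - var (Suc i)) * b \<Longrightarrow> a = (b :: 'a::field mpoly)"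
proof -
  assume "(var i - var (Suc i)) * a = (var i - var (Suc i)) * b"
  then have "(var i - var (Suc i)) * (a - b) = 0" by (simp add: right_diff_distrib)
  then show "a = b" using Xdiff_nz[of i] by (simp, blast)
qed

lemma dd_unique: "(var i - var (Suc i)) * q = p - swap_var i p \<Longrightarrow> dd i p = (q :: 'a::field mpoly)"
  using cancelX dd_char by metis

lemma demazure_aux: "(var i - var (Suc i)) * (f + var (Suc i) * dd i f) = var i * f - var (Suc i) * swap_var i (f :: 'a::field mpoly)"
proof -
  have "(var i - var (Suc i)) * (f + var (Suc i) * dd i f) = (var i - var (Suc i)) * f + var (Suc i) * ((var i - var (Suc i)) * dd i f)"
    by (simp add: algebra_simps)
  also have "\<dots> = (var i - var (Suc i)) * f + var (Suc i) * (f - swap_var i f)" by (simp only: dd_char)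
  also have "\<dots> = var i * f - var (Suc i) * swap_var i f" by (simp add: algebra_simps)
  finally show ?thesis .
qed

lemma demazure_eq: "demazure i f = f + var (Suc i) * dd i (f :: 'a::field mpoly)"
  unfolding demazure_def Suc_eq_plus1[symmetric]
proof (rule the_equality)
  show "(var i - var (Suc i)) * (f + var (Suc i) * dd i f) = var i * f - var (Suc i) * swap_var i f"
    by (rule demazure_aux)
next
  fix g assume "(var i - var (Suc i)) * g = var i * f - var (Suc i) * swap_var i f"
  then show "g = f + var (Suc i) * dd i f" using cancelX demazure_aux by metis
qed

lemma dd_add: "dd i (p + q) = dd i p + dd i (q :: 'a::field mpoly)"
  by (rule dd_unique) (simp add: distrib_left dd_char swap_var_add)

lemma dd_diff: "dd i (p - q) = dd i p - dd i (q :: 'a::field mpoly)"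
  by (rule dd_unique) (simp add: right_diff_distrib dd_char swap_var_diff)

lemma dd_uminus: "dd i (- p) = - dd i (p :: 'a::field mpoly)"
  by (rule dd_unique) (simp add: dd_char swap_var_uminus)

lemma dd_zero: "dd i 0 = (0 :: 'a::field mpoly)"
proof (rule dd_unique)
  have "swap_var i (0 :: 'a mpoly) = 0" by (rule poly_mapping_eqI) (simp add: lookup_swap_var)
  then show "(var i - var (Suc i)) * 0 = (0 :: 'a mpoly) - swap_var i 0" by simp
qed

lemma dd_sum: "finite A \<Longrightarrow> dd i (sum F A) = (\<Sum>x\<in>A. dd i (F x :: 'a::field mpoly))"
  by (induction A rule: finite_induct) (simp_all add: dd_zero dd_add)

lemma dd_mult: "dd i (c * g) = c * dd i g + swap_var i g * dd i (c :: 'a::field mpoly)"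
proof (rule dd_unique)
  have "(var i - var (Suc i)) * (c * dd i g + swap_var i g * dd i c) =
    c * ((var i - var (Suc i)) * dd i g) + swap_var i g * ((var i - var (Suc i)) * dd i c)"
    by (simp add: algebra_simps)
  also have "\<dots> = c * (g - swap_var i g) + swap_var i g * (c - swap_var i c)" by (simp only: dd_char)
  also have "\<dots> = c * g - swap_var i (c * g)" by (simp add: swap_var_mult algebra_simps)
  finally show "(var i - var (Suc i)) * (c * dd i g + swap_var i g * dd i c) = c * g - swap_var i (c * g)" .
qed

lemma dd_sym: "swap_var i g = g \<Longrightarrow> dd i g = (0 :: 'a::field mpoly)"
  by (rule dd_unique) simp

lemma dd_mult_sym: "swap_var i g = g \<Longrightarrow> dd i (g * c) = g * dd i (c :: 'a::field mpoly)"
  by (simp add: dd_mult dd_sym mult.commute)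



lemma esym_insert:
  assumes "finite A" "a \<notin> A" "1 \<le> r"
  shows "(esym r (insert a A) :: 'a::comm_ring_1 mpoly) = esym r A + var a * esym (r - 1) A"
proof -
  have split: "{T. T \<subseteq> insert a A \<and> card T = r} =
     {T. T \<subseteq> A \<and> card T = r} \<union> insert a ` {T. T \<subseteq> A \<and> card T = r - 1}"
  proof (intro set_eqI iffI)
    fix T assume "T \<in> {T. T \<subseteq> insert a A \<and> card T = r}"
    then have T: "T \<subseteq> insert a A" "card T = r" by auto
    show "T \<in> {T. T \<subseteq> A \<and> card T = r} \<union> insert a ` {T. T \<subseteq> A \<and> card T = r - 1}"
    proof (cases "a \<in> T")
      case True
      then have "T = insert a (T - {a})" by auto
      moreover have "T - {a} \<subseteq> A" "card (T - {a}) = r - 1"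
        using T True assms(1) by (auto intro: finite_subset simp: card_Diff_singleton)
      ultimately show ?thesis by blast
    next
      case False then show ?thesis using T by auto
    qed
  next
    fix T assume "T \<in> {T. T \<subseteq> A \<and> card T = r} \<union> insert a ` {T. T \<subseteq> A \<and> card T = r - 1}"
    then show "T \<in> {T. T \<subseteq> insert a A \<and> card T = r}"
    proof
      assume "T \<in> insert a ` {T. T \<subseteq> A \<and> card T = r - 1}"
      then obtain U where U: "U \<subseteq> A" "card U = r - 1" "T = insert a U" by auto
      then have "finite U" "a \<notin> U" using assms finite_subset by auto
      then show ?thesis using U assms(3) by auto
    qed auto
  qed
  have disj: "{T. T \<subseteq> A \<and> card T = r} \<inter> insert a ` {T. T \<subseteq> A \<and> card T = r - 1} = {}"
  proof -
    { fix T assume T: "T \<subseteq> A" "T \<in> insert a ` {T. T \<subseteq> A \<and> card T = r - 1}"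
      then have "a \<in> T" by blast
      then have False using T(1) assms(2) by blast }
    then show ?thesis by blast
  qed
  have fin1: "finite {T. T \<subseteq> A \<and> card T = r}" using assms(1) by (metis (no_types, lifting) Collect_mono Pow_def finite_Collect_subsets rev_finite_subset)
  have fin2: "finite {T. T \<subseteq> A \<and> card T = r - 1}" using assms(1) by (metis (no_types, lifting) Collect_mono Pow_def finite_Collect_subsets rev_finite_subset)
  have inj: "inj_on (insert a) {T. T \<subseteq> A \<and> card T = r - 1}"
    using assms(2) by (intro inj_onI) (metis (no_types, lifting) mem_Collect_eq insert_ident subsetD)
  have "(esym r (insert a A) :: 'a mpoly) = (\<Sum>T\<in>{T. T \<subseteq> A \<and> card T = r}. \<Prod>k\<in>T. var k)
       + (\<Sum>T\<in>insert a ` {T. T \<subseteq> A \<and> card T = r - 1}. \<Prod>k\<in>T. var k)"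
    unfolding esym_def split using fin1 fin2 disj by (intro sum.union_disjoint) auto
  also have "(\<Sum>T\<in>insert a ` {T. T \<subseteq> A \<and> card T = r - 1}. \<Prod>k\<in>T. var k)
      = (\<Sum>T\<in>{T. T \<subseteq> A \<and> card T = r - 1}. (\<Prod>k\<in>insert a T. var k :: 'a mpoly))"
    by (rule sum.reindex[OF inj, unfolded comp_def])
  also have "\<dots> = (\<Sum>T\<in>{T. T \<subseteq> A \<and> card T = r - 1}. var a * (\<Prod>k\<in>T. var k :: 'a mpoly))"
  proof (rule sum.cong[OF refl])
    fix T assume "T \<in> {T. T \<subseteq> A \<and> card T = r - 1}"
    then have "finite T" "a \<notin> T" using assms finite_subset by auto
    then show "(\<Prod>k\<in>insert a T. var k :: 'a mpoly) = var a * (\<Prod>k\<in>T. var k)" by simp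
  qed
  finally show ?thesis by (simp add: esym_def sum_distrib_left)
qed

lemma esym_0: "finite A \<Longrightarrow> esym 0 A = (1 :: 'a::comm_ring_1 mpoly)"
proof -
  assume "finite A"
  then have "{T. T \<subseteq> A \<and> card T = 0} = {{}}" using finite_subset by fastforce
  then show ?thesis by (simp add: esym_def)
qed

lemma esym_big: "finite A \<Longrightarrow> card A < r \<Longrightarrow> esym r A = (0 :: 'a::comm_ring_1 mpoly)"
proof -
  assume "finite A" "card A < r"
  then have "{T. T \<subseteq> A \<and> card T = r} = {}"
  proof -
    { fix T assume T: "T \<subseteq> A" "card T = r"
      have "card T \<le> card A" using card_mono[OF \<open>finite A\<close> T(1)] .
      then have False using T(2) \<open>card A < r\<close> by simp }
    then show ?thesis by blast
  qed
  then show ?thesis unfolding esym_def by (simp only: sum.empty)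
qed

lemma swap_var_prod: "swap_var i (\<Prod>k\<in>T. f k) = (\<Prod>k\<in>T. swap_var i (f k :: 'a::comm_ring_1 mpoly))"
proof (cases "finite T")
  case True then show ?thesis by (induction T rule: finite_induct) (simp_all add: swap_var_mult)
qed simp

lemma swap_var_esym: "swap_var i (esym r S) = (esym r (swap_idx i (Suc i) ` S) :: 'a::comm_ring_1 mpoly)"
proof -
  let ?s = "swap_idx i (Suc i)"
  have injs: "inj ?s" by (rule inj_swap_idx)
  have "swap_var i (esym r S) = (\<Sum>T\<in>{T. T \<subseteq> S \<and> card T = r}. (\<Prod>k\<in>?s ` T. var k :: 'a mpoly))"
    unfolding esym_def swap_var_sum swap_var_prod swap_var_var
    by (rule sum.cong[OF refl]) (simp add: prod.reindex[OF inj_on_subset[OF injs subset_UNIV]] comp_def)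
  also have "\<dots> = (\<Sum>T\<in>(\<lambda>T. ?s ` T) ` {T. T \<subseteq> S \<and> card T = r}. (\<Prod>k\<in>T. var k :: 'a mpoly))"
    by (rule sum.reindex[symmetric, unfolded comp_def]) (meson inj_image_eq_iff inj_onI injs)
  also have "(\<lambda>T. ?s ` T) ` {T. T \<subseteq> S \<and> card T = r} = {T. T \<subseteq> ?s ` S \<and> card T = r}"
  proof (intro set_eqI iffI)
    fix T assume "T \<in> (\<lambda>T. ?s ` T) ` {T. T \<subseteq> S \<and> card T = r}"
    then obtain U where "U \<subseteq> S" "card U = r" "T = ?s ` U" by auto
    then show "T \<in> {T. T \<subseteq> ?s ` S \<and> card T = r}"
      by (auto simp: card_image inj_on_subset[OF injs subset_UNIV])
  next
    fix T assume T: "T \<in> {T. T \<subseteq> ?s ` S \<and> card T = r}"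
    have "T = ?s ` (?s ` T)" by (simp add: image_image)
    moreover have "?s ` T \<subseteq> S" using T by auto
    moreover have "card (?s ` T) = r" using T by (simp add: card_image inj_on_subset[OF injs subset_UNIV])
    ultimately show "T \<in> (\<lambda>T. ?s ` T) ` {T. T \<subseteq> S \<and> card T = r}" by blast
  qed
  finally show ?thesis by (simp add: esym_def)
qed

lemma swap_image_same:
  assumes "(i \<in> S \<longleftrightarrow> Suc i \<in> S)"
  shows "swap_idx i (Suc i) ` S = S"
  using assms by (auto simp: swap_idx_def image_iff split: if_splits)



lemma keys_add_nat: "Poly_Mapping.keys (a + b :: nat \<Rightarrow>\<^sub>0 nat) = Poly_Mapping.keys a \<union> Poly_Mapping.keys b"
  by (auto simp: in_keys_iff lookup_add)

lemma polys_inI: "(\<And>m k. m \<in> Poly_Mapping.keys p \<Longrightarrow> k \<in> Poly_Mapping.keys m \<Longrightarrow> k \<in> {1..n}) \<Longrightarrow> p \<in> polys_in n"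
  unfolding polys_in_def by (simp add: subset_iff)

lemma polys_inD: "p \<in> polys_in n \<Longrightarrow> m \<in> Poly_Mapping.keys p \<Longrightarrow> k \<in> Poly_Mapping.keys m \<Longrightarrow> k \<in> {1..n}"
  unfolding polys_in_def by (simp add: subset_iff)

lemma polys_in_add: "p \<in> polys_in n \<Longrightarrow> q \<in> polys_in n \<Longrightarrow> p + q \<in> polys_in n"
proof (rule polys_inI)
  fix m k assume p: "p \<in> polys_in n" and q: "q \<in> polys_in n" and m: "m \<in> Poly_Mapping.keys (p + q)" and k: "k \<in> Poly_Mapping.keys m"
  have "m \<in> Poly_Mapping.keys p \<or> m \<in> Poly_Mapping.keys q" using m keys_add[of p q] by blast
  then show "k \<in> {1..n}" using polys_inD[OF p _ k] polys_inD[OF q _ k] by blast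
qed

lemma polys_in_diff: "p \<in> polys_in n \<Longrightarrow> q \<in> polys_in n \<Longrightarrow> p - q \<in> polys_in n"
proof (rule polys_inI)
  fix m k assume p: "p \<in> polys_in n" and q: "q \<in> polys_in n" and m: "m \<in> Poly_Mapping.keys (p - q)" and k: "k \<in> Poly_Mapping.keys m"
  have "m \<in> Poly_Mapping.keys p \<or> m \<in> Poly_Mapping.keys q" using m keys_diff[of p q] by blast
  then show "k \<in> {1..n}" using polys_inD[OF p _ k] polys_inD[OF q _ k] by blast
qed

lemma polys_in_uminus: "p \<in> polys_in n \<Longrightarrow> - p \<in> polys_in n"
  unfolding polys_in_def by (simp add: keys_minus)

lemma polys_in_zero: "0 \<in> polys_in n"
  unfolding polys_in_def by simp

lemma polys_in_single0: "Poly_Mapping.single 0 c \<in> polys_in n"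
  unfolding polys_in_def by simp

lemma polys_in_one: "1 \<in> polys_in n"
  unfolding polys_in_def by simp

lemma polys_in_mult: "p \<in> polys_in n \<Longrightarrow> q \<in> polys_in n \<Longrightarrow> p * q \<in> polys_in n"
proof (rule polys_inI)
  fix m k assume p: "p \<in> polys_in n" and q: "q \<in> polys_in n"
    and m: "m \<in> Poly_Mapping.keys (p * q)" and k: "k \<in> Poly_Mapping.keys m"
  from m obtain a b where "m = a + b" "a \<in> Poly_Mapping.keys p" "b \<in> Poly_Mapping.keys q"
    using keys_mult by blast
  with k p q show "k \<in> {1..n}" by (auto simp: keys_add_nat dest: polys_inD)
qed

lemma polys_in_sum: "(\<And>x. x \<in> A \<Longrightarrow> f x \<in> polys_in n) \<Longrightarrow> sum f A \<in> polys_in n"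
  by (induction A rule: infinite_finite_induct) (simp_all add: polys_in_zero polys_in_add)

lemma polys_in_prod: "(\<And>x. x \<in> A \<Longrightarrow> f x \<in> polys_in n) \<Longrightarrow> prod f A \<in> polys_in n"
  by (induction A rule: infinite_finite_induct) (simp_all add: polys_in_one polys_in_mult)

lemma polys_in_power: "p \<in> polys_in n \<Longrightarrow> p ^ k \<in> polys_in n"
  by (induction k) (simp_all add: polys_in_one polys_in_mult)

lemma polys_in_var: "k \<in> {1..n} \<Longrightarrow> var k \<in> polys_in n"
  unfolding polys_in_def var_def by simp

lemma polys_in_esym: "S \<subseteq> {1..n} \<Longrightarrow> esym r S \<in> polys_in n"
  unfolding esym_def
  by (intro polys_in_sum polys_in_prod polys_in_var) auto

lemma polys_in_dd:
  assumes "p \<in> polys_in n" "1 \<le> i" "Suc i \<le> n"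
  shows "dd i (p :: 'a::comm_ring_1 mpoly) \<in> polys_in n"
proof (rule polys_inI)
  fix x k assume x: "x \<in> Poly_Mapping.keys (dd i p)" and k: "k \<in> Poly_Mapping.keys x"
  from keys_dd[OF x] obtain m where m: "m \<in> Poly_Mapping.keys p"
    "\<forall>k. k \<noteq> i \<longrightarrow> k \<noteq> Suc i \<longrightarrow> lk x k = lk m k" by blast
  show "k \<in> {1..n}"
  proof (cases "k = i \<or> k = Suc i")
    case True then show ?thesis using assms by auto
  next
    case False
    then have "k \<in> Poly_Mapping.keys m" using m(2) k by (simp add: in_keys_iff)
    then show ?thesis using polys_inD[OF assms(1) m(1)] by blast
  qed
qed

lemma polys_in_swap:
  assumes "p \<in> polys_in n" "1 \<le> i" "Suc i \<le> n"
  shows "swap_var i (p :: 'a::comm_ring_1 mpoly) \<in> polys_in n"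
proof (rule polys_inI)
  fix x k assume x: "x \<in> Poly_Mapping.keys (swap_var i p)" and k: "k \<in> Poly_Mapping.keys x"
  have m: "sw i x \<in> Poly_Mapping.keys p" using x by (simp add: in_keys_iff lookup_swap_var)
  show "k \<in> {1..n}"
  proof (cases "k = i \<or> k = Suc i")
    case True then show ?thesis using assms by auto
  next
    case False
    then have "swap_idx i (Suc i) k = k" by (simp add: swap_idx_def)
    then have "k \<in> Poly_Mapping.keys (sw i x)" using k by (simp add: in_keys_iff lookup_sw)
    then show ?thesis using polys_inD[OF assms(1) m] by blast
  qed
qed

lemma ideal_inI: "finite H \<Longrightarrow> H \<subseteq> G \<Longrightarrow> (\<And>g. g \<in> H \<Longrightarrow> c g \<in> polys_in n) \<Longrightarrow> f = (\<Sum>g\<in>H. c g * g) \<Longrightarrow> f \<in> ideal_in n G"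
  unfolding ideal_in_def by blast

lemma ideal_inE:
  assumes "f \<in> ideal_in n G"
  obtains H c where "finite H" "H \<subseteq> G" "\<And>g. g \<in> H \<Longrightarrow> c g \<in> polys_in n" "f = (\<Sum>g\<in>H. c g * g)"
  using assms unfolding ideal_in_def by blast

lemma ideal_in_zero: "0 \<in> ideal_in n G"
  by (rule ideal_inI[of "{}"]) auto

lemma ideal_in_gen: "g \<in> G \<Longrightarrow> g \<in> ideal_in n G"
  by (rule ideal_inI[of "{g}" _ "\<lambda>_. 1"]) (auto simp: polys_in_one)

lemma ideal_in_add:
  assumes "f1 \<in> ideal_in n G" "f2 \<in> ideal_in n G"
  shows "f1 + f2 \<in> ideal_in n G"
proof -
  obtain H1 c1 where 1: "finite H1" "H1 \<subseteq> G" "\<And>g. g \<in> H1 \<Longrightarrow> c1 g \<in> polys_in n" "f1 = (\<Sum>g\<in>H1. c1 g * g)"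
    using assms(1) unfolding ideal_in_def by blast
  obtain H2 c2 where 2: "finite H2" "H2 \<subseteq> G" "\<And>g. g \<in> H2 \<Longrightarrow> c2 g \<in> polys_in n" "f2 = (\<Sum>g\<in>H2. c2 g * g)"
    using assms(2) unfolding ideal_in_def by blast
  define c where "c g = (if g \<in> H1 then c1 g else 0) + (if g \<in> H2 then c2 g else 0)" for g
  have fin: "finite (H1 \<union> H2)" using 1 2 by simp
  have "(\<Sum>g\<in>H1 \<union> H2. c g * g) = (\<Sum>g\<in>H1 \<union> H2. if g \<in> H1 then c1 g * g else 0) + (\<Sum>g\<in>H1 \<union> H2. if g \<in> H2 then c2 g * g else 0)"
  proof -
    have "(\<Sum>g\<in>H1 \<union> H2. c g * g) = (\<Sum>g\<in>H1 \<union> H2. (if g \<in> H1 then c1 g * g else 0) + (if g \<in> H2 then c2 g * g else 0))"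
      by (rule sum.cong[OF refl]) (simp add: c_def distrib_right)
    then show ?thesis by (simp only: sum.distrib)
  qed
  also have "\<dots> = f1 + f2"
    unfolding 1(4) 2(4) sum.inter_restrict[OF fin, symmetric] by (simp add: Int_absorb1 Int_absorb2 Un_Int_eq)
  finally show ?thesis
    using 1 2 by (intro ideal_inI[OF fin, of G c]) (auto simp: c_def polys_in_add polys_in_zero)
qed

lemma ideal_in_mult:
  assumes "f \<in> ideal_in n G" "p \<in> polys_in n"
  shows "p * f \<in> ideal_in n G"
proof -
  obtain H c where 1: "finite H" "H \<subseteq> G" "\<And>g. g \<in> H \<Longrightarrow> c g \<in> polys_in n" "f = (\<Sum>g\<in>H. c g * g)"
    using assms(1) unfolding ideal_in_def by blast
  show ?thesis
    using 1 assms(2) by (intro ideal_inI[OF 1(1,2), of "\<lambda>g. p * c g"]) (auto simp: polys_in_mult sum_distrib_left mult.assoc)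
qed

lemma ideal_in_uminus: "f \<in> ideal_in n G \<Longrightarrow> - f \<in> ideal_in n (G :: 'a::comm_ring_1 mpoly set)"
  using ideal_in_mult[of f n G "- 1"] by (simp add: polys_in_uminus polys_in_one)

lemma ideal_in_diff: "f1 \<in> ideal_in n G \<Longrightarrow> f2 \<in> ideal_in n G \<Longrightarrow> f1 - f2 \<in> ideal_in n (G :: 'a::comm_ring_1 mpoly set)"
  using ideal_in_add[of f1 n G "- f2"] ideal_in_uminus by fastforce

lemma ideal_in_sum: "(\<And>x. x \<in> A \<Longrightarrow> f x \<in> ideal_in n G) \<Longrightarrow> sum f A \<in> ideal_in n G"
  by (induction A rule: infinite_finite_induct) (simp_all add: ideal_in_zero ideal_in_add)



lemma gen_I:
  assumes "S \<subseteq> {1..n}" "1 \<le> card S" "r \<le> card S" "card S < r + dk n mu (card S)"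
  shows "esym r S \<in> tanisaki_ideal n mu"
  unfolding tanisaki_ideal_def
  by (rule ideal_in_gen) (use assms in \<open>auto simp: tanisaki_gens_def\<close>)

lemma dk_Suc: "dk n mu (Suc k) = dk n mu k + conj_part n mu (Suc k)"
  by (simp add: dk_def)

lemma esym_del_I:
  assumes Hc: "\<forall>k. 1 \<le> k \<longrightarrow> k < n \<longrightarrow> conj_part n mu k \<le> 1"
    and S: "S \<subseteq> {1..n}" "1 \<le> card S" "r \<le> card S" "card S < r + dk n mu (card S)" "card S < n"
    and j: "j \<in> S"
  shows "esym r (S - {j}) \<in> (tanisaki_ideal n mu :: 'a::comm_ring_1 mpoly set)"
proof -
  have finS: "finite S" using S(1) finite_subset by blast
  have cA: "card (S - {j}) = card S - 1" using j finS by simp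
  show ?thesis
  proof (cases "r \<le> card (S - {j})")
    case False
    then have "esym r (S - {j}) = (0 :: 'a mpoly)" using finS by (intro esym_big) auto
    then show ?thesis by (simp add: tanisaki_ideal_def ideal_in_zero)
  next
    case True
    from S(2) obtain k where k: "card S = Suc k" by (cases "card S") auto
    have "conj_part n mu (Suc k) \<le> 1" using Hc S(5) k by auto
    then have "card S - 1 < r + dk n mu (card S - 1)" using S(4) k dk_Suc[of n mu k] by simp
    show ?thesis
    proof (cases "r = 0")
      case True
      have "esym 0 S \<in> (tanisaki_ideal n mu :: 'a mpoly set)" using S True by (intro gen_I) auto
      then show ?thesis using True finS by (simp add: esym_0)
    next
      case False
      then have "1 \<le> card (S - {j})" using \<open>r \<le> card (S - {j})\<close> by simp
      with \<open>card S - 1 < r + dk n mu (card S - 1)\<close> \<open>r \<le> card (S - {j})\<close> show ?thesis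
        using S(1) cA by (intro gen_I) auto
    qed
  qed
qed



lemma swap_idx_i [simp]: "swap_idx i (Suc i) i = Suc i" "swap_idx i (Suc i) (Suc i) = i"
  by (simp_all add: swap_idx_def)

lemma ideal_I_zero: "0 \<in> tanisaki_ideal n mu"
  by (simp add: tanisaki_ideal_def ideal_in_zero)

lemma gen_dd:
  assumes Hc: "\<forall>k. 1 \<le> k \<longrightarrow> k < n \<longrightarrow> conj_part n mu k \<le> 1"
    and i: "1 \<le> i" "Suc i \<le> n"
    and g: "g \<in> tanisaki_gens n mu"
  shows "var (Suc i) * dd i g \<in> (tanisaki_ideal n mu :: 'a::field mpoly set)"
proof -
  obtain r S where gS: "g = esym r S" and S: "S \<subseteq> {1..n}" "1 \<le> card S" "r \<le> card S" "card S < r + dk n mu (card S)"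
    using g unfolding tanisaki_gens_def by blast
  have finS: "finite S" using S(1) finite_subset by blast
  let ?I = "tanisaki_ideal n mu :: 'a mpoly set"
  consider "r = 0" | "r \<noteq> 0" "i \<in> S \<longleftrightarrow> Suc i \<in> S" | "r \<noteq> 0" "i \<in> S" "Suc i \<notin> S" | "r \<noteq> 0" "i \<notin> S" "Suc i \<in> S"
    by blast
  then show ?thesis
  proof cases
    case 1
    then have "g = 1" using gS finS by (simp add: esym_0)
    then have "dd i g = 0" by (simp add: dd_sym)
    then show ?thesis by (simp add: ideal_I_zero)
  next
    case 2
    then have "swap_var i g = g" using gS by (simp add: swap_var_esym swap_image_same)
    then have "dd i g = 0" by (simp add: dd_sym)
    then show ?thesis by (simp add: ideal_I_zero)
  next
    case 3
    define A where "A = S - {i}"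
    have SA: "S = insert i A" "i \<notin> A" "Suc i \<notin> A" "finite A" using 3 finS by (auto simp: A_def)
    have cS: "card S < n"
    proof -
      have "S \<subseteq> {1..n} - {Suc i}" using S(1) 3 by auto
      then have "card S \<le> card ({1..n} - {Suc i})" by (intro card_mono) auto
      then show ?thesis using i by simp
    qed
    have r1: "1 \<le> r" using 3 by simp
    have img: "swap_idx i (Suc i) ` S = insert (Suc i) A"
      using SA swap_image_same[of i A] by simp
    have e1: "g = esym r A + var i * esym (r - 1) A" using gS SA esym_insert[OF SA(4) SA(2) r1] by simp
    have e2: "swap_var i g = esym r A + var (Suc i) * esym (r - 1) A"
      using gS img esym_insert[OF SA(4) SA(3) r1] by (simp add: swap_var_esym)
    have "dd i g = esym (r - 1) A"
      by (rule dd_unique) (simp add: e2 e1[symmetric] algebra_simps, simp add: e1 algebra_simps)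
    then have "var (Suc i) * dd i g = esym r (insert (Suc i) A) - esym r A"
      using esym_insert[OF SA(4) SA(3) r1] by (metis add_diff_cancel_left')
    moreover have "esym r (insert (Suc i) A) \<in> ?I"
    proof (rule gen_I)
      have "card (insert (Suc i) A) = card S" using SA by simp
      then show "insert (Suc i) A \<subseteq> {1..n}" "1 \<le> card (insert (Suc i) A)" "r \<le> card (insert (Suc i) A)"
        "card (insert (Suc i) A) < r + dk n mu (card (insert (Suc i) A))"
        using S SA i by auto
    qed
    moreover have "esym r A \<in> ?I"
      using esym_del_I[OF Hc S cS, of i] 3 by (simp add: A_def)
    ultimately show ?thesis unfolding tanisaki_ideal_def by (simp add: ideal_in_diff)
  next
    case 4
    define A where "A = S - {Suc i}"
    have SA: "S = insert (Suc i) A" "i \<notin> A" "Suc i \<notin> A" "finite A" using 4 finS by (auto simp: A_def)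
    have cS: "card S < n"
    proof -
      have "S \<subseteq> {1..n} - {i}" using S(1) 4 by auto
      then have "card S \<le> card ({1..n} - {i})" by (intro card_mono) auto
      then show ?thesis using i by simp
    qed
    have r1: "1 \<le> r" using 4 by simp
    have img: "swap_idx i (Suc i) ` S = insert i A"
      using SA swap_image_same[of i A] by simp
    have e1: "g = esym r A + var (Suc i) * esym (r - 1) A" using gS SA esym_insert[OF SA(4) SA(3) r1] by simp
    have e2: "swap_var i g = esym r A + var i * esym (r - 1) A"
      using gS img esym_insert[OF SA(4) SA(2) r1] by (simp add: swap_var_esym)
    have "dd i g = - esym (r - 1) A"
      by (rule dd_unique) (simp add: e2, simp add: e1 algebra_simps)
    then have "var (Suc i) * dd i g = esym r A - g"
      using e1 by simp
    moreover have "g \<in> ?I" using g unfolding tanisaki_ideal_def by (rule ideal_in_gen)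
    moreover have "esym r A \<in> ?I"
      using esym_del_I[OF Hc S cS, of "Suc i"] 4 by (simp add: A_def)
    ultimately show ?thesis unfolding tanisaki_ideal_def by (simp add: ideal_in_diff)
  qed
qed

lemma hook_direction:
  assumes Hc: "\<forall>k. 1 \<le> k \<longrightarrow> k < n \<longrightarrow> conj_part n mu k \<le> 1"
    and i: "1 \<le> i" "Suc i \<le> n"
    and f: "f \<in> (tanisaki_ideal n mu :: 'a::field mpoly set)"
  shows "demazure i f \<in> tanisaki_ideal n mu"
proof -
  let ?I = "tanisaki_ideal n mu :: 'a mpoly set"
  obtain H c where H: "finite H" "H \<subseteq> tanisaki_gens n mu" "\<And>g. g \<in> H \<Longrightarrow> c g \<in> polys_in n"
     "f = (\<Sum>g\<in>H. c g * g)"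
    using f unfolding tanisaki_ideal_def ideal_in_def by blast
  have "var (Suc i) * dd i f = (\<Sum>g\<in>H. c g * (var (Suc i) * dd i g) + (var (Suc i) * dd i (c g)) * swap_var i g)"
  proof -
    have "var (Suc i) * dd i f = (\<Sum>g\<in>H. var (Suc i) * dd i (c g * g))"
      by (simp add: H(4) dd_sum[OF H(1)] sum_distrib_left)
    also have "\<dots> = (\<Sum>g\<in>H. c g * (var (Suc i) * dd i g) + (var (Suc i) * dd i (c g)) * swap_var i g)"
      by (rule sum.cong[OF refl]) (simp only: dd_mult, simp add: algebra_simps)
    finally show ?thesis .
  qed
  moreover have each: "c g * (var (Suc i) * dd i g) + (var (Suc i) * dd i (c g)) * swap_var i g \<in> ?I" if g: "g \<in> H" for g
  proof -
    have g': "g \<in> tanisaki_gens n mu" using g H(2) by blast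
    have a: "c g * (var (Suc i) * dd i g) \<in> ?I"
      unfolding tanisaki_ideal_def
      by (rule ideal_in_mult) (use gen_dd[OF Hc i g'] H(3)[OF g] in \<open>auto simp: tanisaki_ideal_def\<close>)
    have sg: "swap_var i g \<in> tanisaki_gens n mu"
    proof -
      obtain r S where gS: "g = esym r S" and S: "S \<subseteq> {1..n}" "1 \<le> card S" "r \<le> card S" "card S < r + dk n mu (card S)"
        using g' unfolding tanisaki_gens_def by blast
      have "swap_idx i (Suc i) ` S \<subseteq> {1..n}" using S(1) i by (auto simp: swap_idx_def)
      moreover have "card (swap_idx i (Suc i) ` S) = card S"
        by (rule card_image) (rule inj_on_subset[OF inj_swap_idx subset_UNIV])
      ultimately show ?thesis using S gS unfolding tanisaki_gens_def swap_var_esym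
        by (intro CollectI exI[of _ r] exI[of _ "swap_idx i (Suc i) ` S"]) (simp add: swap_var_esym)
    qed
    have b: "(var (Suc i) * dd i (c g)) * swap_var i g \<in> ?I"
      unfolding tanisaki_ideal_def
      using i H(3)[OF g]
      by (intro ideal_in_mult ideal_in_gen sg polys_in_mult polys_in_var polys_in_dd) auto
    show "c g * (var (Suc i) * dd i g) + (var (Suc i) * dd i (c g)) * swap_var i g \<in> ?I"
      using a b unfolding tanisaki_ideal_def by (rule ideal_in_add)
  qed
  moreover have "(\<Sum>g\<in>H. c g * (var (Suc i) * dd i g) + (var (Suc i) * dd i (c g)) * swap_var i g) \<in> ?I"
    using each unfolding tanisaki_ideal_def by (rule ideal_in_sum)
  ultimately have "var (Suc i) * dd i f \<in> ?I" by metis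
  then show ?thesis using f unfolding demazure_eq tanisaki_ideal_def by (intro ideal_in_add)
qed



primrec phi :: "nat \<Rightarrow> 'a::field mpoly \<Rightarrow> 'a mpoly" where
  "phi 0 p = p"
| "phi (Suc j) p = dd (j + 3) (phi j p)"

definition Lf :: "nat \<Rightarrow> 'a::field mpoly \<Rightarrow> 'a" where
  "Lf l p = lk (dd 1 (phi (l - 1) p)) 0"

lemma phi_add: "phi j (p + q) = phi j p + phi j q"
  by (induction j) (simp_all add: dd_add)

lemma phi_zero: "phi j 0 = 0"
  by (induction j) (simp_all add: dd_zero)

lemma phi_uminus: "phi j (- p) = - phi j p"
  by (induction j) (simp_all add: dd_uminus)

lemma phi_sum: "finite A \<Longrightarrow> phi j (sum F A) = (\<Sum>x\<in>A. phi j (F x))"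
  by (induction A rule: finite_induct) (simp_all add: phi_zero phi_add)

lemma phi_sym_mult:
  "(\<forall>k. 3 \<le> k \<longrightarrow> k < j + 3 \<longrightarrow> swap_var k g = g) \<Longrightarrow> phi j (g * c) = g * phi j c"
  by (induction j) (simp_all add: dd_mult_sym)

lemma phi_dd3: "dd 3 p = 0 \<Longrightarrow> 1 \<le> j \<Longrightarrow> phi j p = 0"
proof (induction j)
  case (Suc j) then show ?case by (cases j) (simp_all add: dd_zero)
qed simp

lemma phi_deg: "(\<forall>m\<in>Poly_Mapping.keys p. d \<le> tdeg m) \<Longrightarrow> \<forall>m\<in>Poly_Mapping.keys (phi j p). d \<le> tdeg m + j"
proof (induction j)
  case (Suc j)
  show ?case
  proof
    fix x assume "x \<in> Poly_Mapping.keys (phi (Suc j) p)"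
    then obtain m where "m \<in> Poly_Mapping.keys (phi j p)" "tdeg m = Suc (tdeg x)"
      using keys_dd by fastforce
    then show "d \<le> tdeg x + Suc j" using Suc by fastforce
  qed
qed simp

definition supp12 :: "'a::zero mpoly \<Rightarrow> bool" where
  "supp12 p \<longleftrightarrow> (\<forall>m\<in>Poly_Mapping.keys p. lk m 1 = 0 \<and> lk m 2 = 0)"

lemma phi_supp: "supp12 p \<Longrightarrow> supp12 (phi j p)"
proof (induction j)
  case (Suc j)
  show ?case unfolding supp12_def
  proof
    fix x assume "x \<in> Poly_Mapping.keys (phi (Suc j) p)"
    then obtain m where "m \<in> Poly_Mapping.keys (phi j p)"
      "\<forall>k. k \<noteq> j + 3 \<longrightarrow> k \<noteq> Suc (j + 3) \<longrightarrow> lk x k = lk m k"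
      using keys_dd by fastforce
    then show "lk x 1 = 0 \<and> lk x 2 = 0" using Suc unfolding supp12_def by auto
  qed
qed simp

lemma sw_fix: "lk m i = lk m (Suc i) \<Longrightarrow> sw i m = m"
  by (rule poly_mapping_eqI) (simp add: lookup_sw swap_idx_def)

lemma supp12_sym: "supp12 p \<Longrightarrow> swap_var 1 p = (p :: 'a::comm_ring_1 mpoly)"
proof (rule poly_mapping_eqI)
  fix m assume s: "supp12 p"
  show "lk (swap_var 1 p) m = lk p m"
  proof (cases "lk m 1 = lk m 2")
    case True
    then have "sw 1 m = m" by (intro sw_fix) (simp add: numeral_2_eq_2)
    then show ?thesis by (simp add: lookup_swap_var)
  next
    case False
    then have "m \<notin> Poly_Mapping.keys p" using s unfolding supp12_def by auto
    moreover have "sw 1 m \<notin> Poly_Mapping.keys p"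
    proof
      assume "sw 1 m \<in> Poly_Mapping.keys p"
      then have "lk (sw 1 m) 1 = 0 \<and> lk (sw 1 m) 2 = 0" using s unfolding supp12_def by auto
      then show False using False by (simp add: lookup_sw swap_idx_def numeral_2_eq_2)
    qed
    ultimately show ?thesis by (simp add: lookup_swap_var in_keys_iff)
  qed
qed

lemma Lf_add: "Lf l (p + q) = Lf l p + Lf l q"
  by (simp add: Lf_def phi_add dd_add lookup_add)

lemma Lf_uminus: "Lf l (- p) = - Lf l p"
  by (simp add: Lf_def phi_uminus dd_uminus)

lemma Lf_zero: "Lf l 0 = 0"
  by (simp add: Lf_def phi_zero dd_zero)

lemma Lf_sum: "finite A \<Longrightarrow> Lf l (sum F A) = (\<Sum>x\<in>A. Lf l (F x))"
  by (induction A rule: finite_induct) (simp_all add: Lf_zero Lf_add)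

lemma Lf_deg:
  assumes "1 \<le> l" "\<forall>m\<in>Poly_Mapping.keys p. l + 1 \<le> tdeg m"
  shows "Lf l p = 0"
proof -
  have A: "\<forall>m\<in>Poly_Mapping.keys (phi (l - 1) p). l + 1 \<le> tdeg m + (l - 1)"
    by (rule phi_deg) (use assms in auto)
  have "0 \<notin> Poly_Mapping.keys (dd 1 (phi (l - 1) p))"
  proof
    assume "0 \<in> Poly_Mapping.keys (dd 1 (phi (l - 1) p))"
    then obtain m where "m \<in> Poly_Mapping.keys (phi (l - 1) p)" "tdeg m = Suc (tdeg 0)"
      using keys_dd by blast
    then show False using A assms(1) by fastforce
  qed
  then show ?thesis by (simp add: Lf_def in_keys_iff)
qed

lemma lk_mult_0:
  fixes g q :: "'a::comm_ring_1 mpoly"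
  assumes "lk g 0 = 0"
  shows "lk (g * q) 0 = (0::'a::comm_ring_1)"
proof -
  have "0 \<notin> Poly_Mapping.keys (g * q)"
  proof
    assume "0 \<in> Poly_Mapping.keys (g * q)"
    then have "0 \<in> {a + b | a b. a \<in> Poly_Mapping.keys g \<and> b \<in> Poly_Mapping.keys q}"
      by (rule subsetD[OF keys_mult])
    then obtain a b where ab: "0 = a + b" "a \<in> Poly_Mapping.keys g" by blast
    have "lk a k = 0" for k
    proof -
      have "lk (a + b) k = 0" using ab(1) by (metis lookup_zero)
      then show ?thesis by (simp add: lookup_add)
    qed
    then have "a = 0" by (intro poly_mapping_eqI) simp
    then show False using assms ab(2) by (simp add: in_keys_iff)
  qed
  then show ?thesis by (simp add: in_keys_iff)
qed

lemma Lf_symmult: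
  assumes "swap_var 1 g = g" "\<forall>k. 3 \<le> k \<longrightarrow> k \<le> l + 1 \<longrightarrow> swap_var k g = g" "lk g 0 = 0" "1 \<le> l"
  shows "Lf l (g * c) = (0 :: 'a::field)"
proof -
  have "phi (l - 1) (g * c) = g * phi (l - 1) c"
    by (rule phi_sym_mult) (use assms(2,4) in auto)
  then have "dd 1 (phi (l - 1) (g * c)) = g * dd 1 (phi (l - 1) c)"
    using assms(1) by (simp add: dd_mult_sym)
  then show ?thesis by (simp add: Lf_def lk_mult_0[OF assms(3)])
qed

lemma sw_0: "sw i 0 = 0"
  by (rule poly_mapping_eqI) (simp add: lookup_sw)

lemma swap_single0: "swap_var i (Poly_Mapping.single 0 a) = Poly_Mapping.single 0 a"
  by (simp add: swap_var_single sw_0)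

lemma lk_single0_mult: "lk (Poly_Mapping.single 0 a * q) m = a * lk q m"
  by (simp add: mult_map_scale_conv_mult[symmetric] Poly_Mapping.map.rep_eq when_def)

lemma Lf_scalar: "Lf l (Poly_Mapping.single 0 a * p) = a * Lf l (p :: 'a::field mpoly)"
proof -
  have "phi (l - 1) (Poly_Mapping.single 0 a * p) = Poly_Mapping.single 0 a * phi (l - 1) p"
    by (rule phi_sym_mult) (simp add: swap_single0)
  then show ?thesis by (simp add: Lf_def dd_mult_sym swap_single0 lk_single0_mult)
qed



definition ind :: "nat set \<Rightarrow> (nat \<Rightarrow>\<^sub>0 nat)" where
  "ind T = (\<Sum>k\<in>T. Poly_Mapping.single k 1)"

lemma tdeg_ind: "finite T \<Longrightarrow> tdeg (ind T) = card T"
  unfolding ind_def by (induction T rule: finite_induct) (simp_all add: tdeg_add tdeg_single)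

lemma prodvar_mon: "finite T \<Longrightarrow> (\<Prod>k\<in>T. var k) = (mon (ind T) :: 'a::comm_ring_1 mpoly)"
  unfolding ind_def by (induction T rule: finite_induct) (simp_all add: mon_0 var_mon mon_mult)

lemma keys_esym:
  assumes "finite S" "m \<in> Poly_Mapping.keys (esym r S :: 'a::comm_ring_1 mpoly)"
  shows "tdeg m = r"
proof -
  have "m \<in> (\<Union>T\<in>{T. T \<subseteq> S \<and> card T = r}. Poly_Mapping.keys (\<Prod>k\<in>T. var k :: 'a mpoly))"
    using assms(2) unfolding esym_def by (rule subsetD[OF keys_sum])
  then obtain T where T: "T \<subseteq> S" "card T = r" "m \<in> Poly_Mapping.keys (\<Prod>k\<in>T. var k :: 'a mpoly)" by blast
  have fT: "finite T" using T(1) assms(1) finite_subset by blast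
  then have "m \<in> Poly_Mapping.keys (mon (ind T) :: 'a mpoly)" using T(3) by (simp add: prodvar_mon)
  then have "m = ind T" using keys_mon by blast
  then show ?thesis using tdeg_ind[OF fT] T(2) by simp
qed

lemma keys_mult_deg:
  assumes "\<forall>m\<in>Poly_Mapping.keys g. d \<le> tdeg m"
  shows "\<forall>m\<in>Poly_Mapping.keys (c * g :: 'a::comm_ring_1 mpoly). d \<le> tdeg m"
proof
  fix m assume "m \<in> Poly_Mapping.keys (c * g)"
  then have "m \<in> {a + b | a b. a \<in> Poly_Mapping.keys c \<and> b \<in> Poly_Mapping.keys g}"
    by (rule subsetD[OF keys_mult])
  then obtain a b where "m = a + b" "b \<in> Poly_Mapping.keys g" by blast
  then show "d \<le> tdeg m" using assms by (auto simp: tdeg_add)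
qed

lemma Lf_big_esym:
  assumes "finite S" "l + 1 \<le> r" "1 \<le> l"
  shows "Lf l (c * esym r S) = (0 :: 'a::field)"
  by (rule Lf_deg[OF assms(3)]) (rule keys_mult_deg, use keys_esym[OF assms(1)] assms(2) in auto)

lemma lk_esym_0:
  assumes "finite S" "1 \<le> r"
  shows "lk (esym r S :: 'a::comm_ring_1 mpoly) 0 = 0"
proof -
  have "0 \<notin> Poly_Mapping.keys (esym r S :: 'a mpoly)" using keys_esym[OF assms(1), of 0 r] assms(2) by auto
  then show ?thesis by (simp add: in_keys_iff)
qed

lemma esym_full_sym:
  assumes "1 \<le> k" "Suc k \<le> n"
  shows "swap_var k (esym r {1..n}) = (esym r {1..n} :: 'a::comm_ring_1 mpoly)"
  using assms by (simp add: swap_var_esym swap_image_same)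

lemma Lf_full_esym:
  assumes "1 \<le> r" "1 \<le> l" "l + 2 \<le> n"
  shows "Lf l (c * esym r {1..n}) = (0 :: 'a::field)"
proof -
  have s1: "swap_var 1 (esym r {1..n}) = (esym r {1..n} :: 'a mpoly)"
    by (rule esym_full_sym) (use assms in auto)
  have s2: "\<forall>k. 3 \<le> k \<longrightarrow> k \<le> l + 1 \<longrightarrow> swap_var k (esym r {1..n}) = (esym r {1..n} :: 'a mpoly)"
    by (intro allI impI esym_full_sym) (use assms in auto)
  have s3: "lk (esym r {1..n} :: 'a mpoly) 0 = 0" by (rule lk_esym_0) (use assms in auto)
  have "Lf l (esym r {1..n} * c) = 0"
    by (rule Lf_symmult[OF s1 s2 s3 assms(2)])
  then show ?thesis by (simp add: mult.commute)
qed

lemma esym_expand: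
  assumes "finite S" "j \<notin> S"
  shows "(esym q S :: 'a::comm_ring_1 mpoly) = (\<Sum>t\<le>q. (- var j) ^ t * esym (q - t) (insert j S))"
proof (induction q)
  case 0 then show ?case using assms by (simp add: esym_0)
next
  case (Suc q)
  have ins: "esym (Suc q) (insert j S) = esym (Suc q) S + var j * (esym q S :: 'a mpoly)"
    using esym_insert[OF assms, of "Suc q"] by simp
  have "(\<Sum>t\<le>Suc q. (- var j) ^ t * esym (Suc q - t) (insert j S)) =
     esym (Suc q) (insert j S) + (\<Sum>t\<le>q. (- var j) ^ Suc t * (esym (q - t) (insert j S) :: 'a mpoly))"
    by (subst sum.atMost_Suc_shift) simp
  also have "\<dots> = esym (Suc q) (insert j S) - var j * esym q S"
  proof -
    have "(\<Sum>t\<le>q. (- var j) ^ Suc t * (esym (q - t) (insert j S) :: 'a mpoly)) = - (var j * (\<Sum>t\<le>q. (- var j) ^ t * esym (q - t) (insert j S)))"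
      by (simp add: sum_distrib_left sum_negf[symmetric] mult.assoc)
    then show ?thesis by (simp add: Suc.IH[symmetric])
  qed
  also have "\<dots> = esym (Suc q) S" using ins by simp
  finally show ?case by simp
qed



lemma tdeg_sum: "tdeg m = sum (lk m) (Poly_Mapping.keys m)"
proof -
  have "Poly_Mapping.keys m = {a. lk m a \<noteq> 0}" by (auto simp: in_keys_iff)
  then show ?thesis unfolding tdeg_def by (simp add: Sum_any.expand_set)
qed

lemma tdeg_pos: "m \<noteq> 0 \<Longrightarrow> 1 \<le> tdeg m"
proof -
  assume "m \<noteq> 0"
  then obtain k where k: "lk m k \<noteq> 0" by (metis lookup_zero poly_mapping_eqI)
  then have "k \<in> Poly_Mapping.keys m" by (simp add: in_keys_iff)
  then have "lk m k \<le> tdeg m" unfolding tdeg_sum by (intro member_le_sum) auto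
  then show ?thesis using k by simp
qed

lemma keys_var_power: "Poly_Mapping.keys (var j ^ l :: 'a::comm_ring_1 mpoly) \<subseteq> {Poly_Mapping.single j l}"
  by (simp add: var_power keys_mon)

lemma Lf_var_power:
  assumes "2 \<le> l" "1 \<le> j"
  shows "Lf l (var j ^ l) = (0::'a::field)"
proof (cases "j = 3 \<or> j = 4")
  case False
  then have "swap_var 3 (var j ^ l) = (var j ^ l :: 'a mpoly)"
    by (simp add: swap_var_power swap_var_var swap_idx_def)
  then have "dd 3 (var j ^ l :: 'a mpoly) = 0" by (rule dd_sym)
  then have "phi (l - 1) (var j ^ l :: 'a mpoly) = 0" using assms by (intro phi_dd3) auto
  then show ?thesis by (simp add: Lf_def dd_zero)
next
  case True
  have "supp12 (var j ^ l :: 'a mpoly)"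
    unfolding supp12_def using keys_var_power[of j l] True by (auto simp: lookup_single)
  then have "supp12 (phi (l - 1) (var j ^ l :: 'a mpoly))" by (rule phi_supp)
  then have "dd 1 (phi (l - 1) (var j ^ l :: 'a mpoly)) = 0" by (intro dd_sym supp12_sym)
  then show ?thesis by (simp add: Lf_def)
qed

lemma Lf_c_var_power:
  assumes "2 \<le> l" "1 \<le> j"
  shows "Lf l (c * var j ^ l) = (0::'a::field)"
proof -
  define c' where "c' = c - Poly_Mapping.single 0 (lk c 0)"
  have c: "c = Poly_Mapping.single 0 (lk c 0) + c'" by (simp add: c'_def)
  have "\<forall>m\<in>Poly_Mapping.keys c'. 1 \<le> tdeg m"
  proof
    fix m assume "m \<in> Poly_Mapping.keys c'"
    moreover have "lk c' 0 = 0" by (simp add: c'_def lookup_minus)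
    ultimately have "m \<noteq> 0" by (auto simp: in_keys_iff)
    then show "1 \<le> tdeg m" by (rule tdeg_pos)
  qed
  moreover have "\<forall>m\<in>Poly_Mapping.keys (var j ^ l :: 'a mpoly). tdeg m = l"
    using keys_var_power[of j l] by (auto simp: tdeg_single)
  ultimately have "\<forall>m\<in>Poly_Mapping.keys (c' * var j ^ l). l + 1 \<le> tdeg m"
  proof -
    assume A: "\<forall>m\<in>Poly_Mapping.keys c'. 1 \<le> tdeg m" and B: "\<forall>m\<in>Poly_Mapping.keys (var j ^ l :: 'a mpoly). tdeg m = l"
    show ?thesis
    proof
      fix m assume "m \<in> Poly_Mapping.keys (c' * var j ^ l)"
      then have "m \<in> {a + b | a b. a \<in> Poly_Mapping.keys c' \<and> b \<in> Poly_Mapping.keys (var j ^ l :: 'a mpoly)}"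
        by (rule subsetD[OF keys_mult])
      then obtain a b where "m = a + b" "a \<in> Poly_Mapping.keys c'" "b \<in> Poly_Mapping.keys (var j ^ l :: 'a mpoly)" by blast
      then show "l + 1 \<le> tdeg m" using A B by (fastforce simp: tdeg_add)
    qed
  qed
  then have "Lf l (c' * var j ^ l) = 0" using assms by (intro Lf_deg) auto
  moreover have "Lf l (Poly_Mapping.single 0 (lk c 0) * var j ^ l) = 0"
    by (simp only: Lf_scalar Lf_var_power[OF assms] mult_zero_right)
  ultimately show ?thesis by (subst c) (simp add: distrib_right Lf_add)
qed

lemma Lf_c_neg_var_power:
  assumes "2 \<le> l" "1 \<le> j"
  shows "Lf l (c * (- var j) ^ l) = (0::'a::field)"
proof (cases "even l")
  case True then show ?thesis using Lf_c_var_power[OF assms] by (simp add: power_minus_even)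
next
  case False then show ?thesis using Lf_c_var_power[OF assms, of c] by (simp add: power_minus_odd Lf_uminus)
qed

lemma Lf_esym_del:
  assumes "2 \<le> l" "l + 2 \<le> n" "j \<in> {1..n}"
  shows "Lf l (c * esym l ({1..n} - {j})) = (0::'a::field)"
proof -
  have ins: "insert j ({1..n} - {j}) = {1..n}" "insert j {1..n} = {1..n}" using assms by auto
  have "c * esym l ({1..n} - {j}) = (\<Sum>t\<le>l. (c * (- var j) ^ t) * esym (l - t) {1..n})"
  proof -
    have e: "esym l ({1..n} - {j}) = (\<Sum>t\<le>l. (- var j) ^ t * esym (l - t) {1..n} :: 'a mpoly)"
      using esym_expand[of "{1..n} - {j}" j l, unfolded ins(1)] by simp
    show ?thesis unfolding e by (simp add: sum_distrib_left mult.assoc)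
  qed
  then have "Lf l (c * esym l ({1..n} - {j})) = (\<Sum>t\<le>l. Lf l ((c * (- var j) ^ t) * esym (l - t) {1..n}))"
    by (simp add: Lf_sum)
  also have "\<dots> = (\<Sum>t\<le>l. if t = l then Lf l (c * (- var j) ^ l) else 0)"
  proof (rule sum.cong[OF refl])
    fix t assume t: "t \<in> {..l}"
    show "Lf l ((c * (- var j) ^ t) * esym (l - t) {1..n}) = (if t = l then Lf l (c * (- var j) ^ l) else 0)"
    proof (cases "t = l")
      case True then show ?thesis by (simp add: esym_0)
    next
      case False then show ?thesis using t assms by (intro trans[OF Lf_full_esym]) auto
    qed
  qed
  also have "\<dots> = Lf l (c * (- var j) ^ l)" by simp
  also have "\<dots> = 0" by (rule Lf_c_neg_var_power) (use assms in auto)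
  finally show ?thesis .
qed



lemma dd_var_Suc: "dd k (var (Suc k)) = (- 1 :: 'a::field mpoly)"
  by (rule dd_unique) (simp add: swap_var_var swap_idx_def algebra_simps)

lemma dd_var_self: "dd k (var k) = (1 :: 'a::field mpoly)"
  by (rule dd_unique) (simp add: swap_var_var swap_idx_def)

lemma prod_sym:
  assumes "k \<notin> V" "Suc k \<notin> V"
  shows "swap_var k (\<Prod>x\<in>V. var x) = (\<Prod>x\<in>V. var x :: 'a::comm_ring_1 mpoly)"
  unfolding swap_var_prod
  by (rule prod.cong[OF refl]) (use assms in \<open>auto simp: swap_var_var swap_idx_def\<close>)

lemma swap_neg1_pow: "swap_var k ((- 1) ^ j) = ((- 1) ^ j :: 'a::comm_ring_1 mpoly)"
  by (simp add: swap_var_power swap_var_uminus)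

lemma phi_chain:
  assumes "finite U" "3 \<notin> U"
  shows "phi j (\<Prod>k\<in>U. var k) = (if {4..j+3} \<subseteq> U then (- 1) ^ j * (\<Prod>k\<in>U - {4..j+3}. var k) else (0 :: 'a::field mpoly))"
proof (induction j)
  case 0 then show ?case by simp
next
  case (Suc j)
  show ?case
  proof (cases "{4..j+3} \<subseteq> U")
    case False
    have "{4..j+3} \<subseteq> {4..Suc j+3}" by auto
    then have "\<not> {4..Suc j+3} \<subseteq> U" using False by blast
    then show ?thesis using Suc False by (simp add: dd_zero)
  next
    case True
    define V where "V = U - {4..j+3}"
    have nV: "j + 3 \<notin> V" using assms(2) by (cases j) (auto simp: V_def)
    have fV: "finite V" using assms(1) by (simp add: V_def)
    have ph: "phi (Suc j) (\<Prod>k\<in>U. var k) = dd (j + 3) ((- 1) ^ j * (\<Prod>k\<in>V. var k) :: 'a mpoly)"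
      using Suc True by (simp add: V_def)
    show ?thesis
    proof (cases "j + 4 \<in> U")
      case True2: True
      then have inV: "j + 4 \<in> V" by (simp add: V_def)
      have V': "V - {j+4} = U - {4..Suc j+3}" by (auto simp: V_def)
      have P: "(\<Prod>k\<in>V. var k :: 'a mpoly) = (\<Prod>k\<in>V - {j+4}. var k) * var (Suc (j + 3))"
        using prod.remove[OF fV inV, of var] by (simp add: ac_simps)
      have sym: "swap_var (j + 3) ((- 1) ^ j * (\<Prod>k\<in>V - {j+4}. var k) :: 'a mpoly) = (- 1) ^ j * (\<Prod>k\<in>V - {j+4}. var k)"
        using nV by (simp add: swap_var_mult swap_neg1_pow prod_sym)
      have "dd (j + 3) ((- 1) ^ j * (\<Prod>k\<in>V. var k) :: 'a mpoly) =
         ((- 1) ^ j * (\<Prod>k\<in>V - {j+4}. var k)) * dd (j + 3) (var (Suc (j + 3)))"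
        unfolding P mult.assoc[symmetric] by (rule dd_mult_sym[OF sym])
      also have "\<dots> = (- 1) ^ Suc j * (\<Prod>k\<in>U - {4..Suc j+3}. var k)"
        by (simp only: dd_var_Suc) (simp add: V')
      finally have fin0: "dd (j + 3) ((- 1) ^ j * (\<Prod>k\<in>V. var k) :: 'a mpoly) = (- 1) ^ Suc j * (\<Prod>k\<in>U - {4..Suc j+3}. var k)" .
      have fin: "phi (Suc j) (\<Prod>k\<in>U. var k) = (- 1) ^ Suc j * (\<Prod>k\<in>U - {4..Suc j+3}. var k :: 'a mpoly)"
        using ph fin0 by (rule trans)
      have sub: "{4..Suc j+3} \<subseteq> U"
      proof
        fix x assume "x \<in> {4..Suc j+3}"
        then have "x \<in> {4..j+3} \<or> x = j + 4" by auto
        then show "x \<in> U" using True True2 by auto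
      qed
      show ?thesis using fin sub by simp
    next
      case False2: False
      have sym: "swap_var (j + 3) ((- 1) ^ j * (\<Prod>k\<in>V. var k) :: 'a mpoly) = (- 1) ^ j * (\<Prod>k\<in>V. var k)"
      proof -
        have "swap_var (j+3) (\<Prod>k\<in>V. var k) = (\<Prod>k\<in>V. var k :: 'a mpoly)"
          by (rule prod_sym) (use nV False2 in \<open>auto simp: V_def add.commute\<close>)
        then show ?thesis by (simp add: swap_var_mult swap_neg1_pow)
      qed
      have "j + 4 \<in> {4..Suc j+3}" by simp
      then have "\<not> {4..Suc j+3} \<subseteq> U" using False2 by blast
      then show ?thesis using ph dd_sym[OF sym] by simp
    qed
  qed
qed



lemma lk_neg1_pow: "lk ((- 1) ^ k :: 'a::comm_ring_1 mpoly) 0 = (- 1) ^ k"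
  by (cases "even k") (simp_all add: lookup_one)

lemma Lf_prod_U:
  assumes l: "2 \<le> l" "l + 2 \<le> n" and U: "U \<subseteq> {1..n} - {2,3}" "card U = l"
  shows "Lf l (\<Prod>k\<in>U. var k) = (if U = insert 1 {4..l+2} then (- 1) ^ (l - 1) else (0::'a::field))"
proof -
  have fU: "finite U" using U(1) finite_subset by blast
  have e: "l - 1 + 3 = l + 2" using l by simp
  have ph: "phi (l - 1) (\<Prod>k\<in>U. var k) = (if {4..l+2} \<subseteq> U then (- 1) ^ (l - 1) * (\<Prod>k\<in>U - {4..l+2}. var k) else (0 :: 'a mpoly))"
  proof -
    have n3: "3 \<notin> U" using U(1) by auto
    show ?thesis using phi_chain[OF fU n3, of "l - 1"] unfolding e by simp
  qed
  show ?thesis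
  proof (cases "{4..l+2} \<subseteq> U")
    case False
    then have "U \<noteq> insert 1 {4..l+2}" by auto
    then show ?thesis using False ph by (simp add: Lf_def dd_zero)
  next
    case True
    have cW: "card (U - {4..l+2}) = 1" using True U(2) l by (simp add: card_Diff_subset fU)
    then obtain u where W: "U - {4..l+2} = {u}" by (rule card_1_singletonE)
    have u: "u \<in> U" "u \<notin> {4..l+2}" using W by auto
    have UW: "U = insert u {4..l+2}" using W True by auto
    have d: "dd 1 (phi (l - 1) (\<Prod>k\<in>U. var k)) = (- 1) ^ (l - 1) * dd 1 (var u :: 'a mpoly)"
      using True ph W by (simp add: dd_mult_sym swap_neg1_pow)
    show ?thesis
    proof (cases "u = 1")
      case True
      then show ?thesis using d UW by (simp add: Lf_def dd_var_self lk_neg1_pow)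
    next
      case False
      have "u \<noteq> 2" "u \<noteq> 1" using u(1) U(1) False by auto
      then have "swap_var 1 (var u) = (var u :: 'a mpoly)" by (simp add: swap_var_var swap_idx_def)
      then have "dd 1 (var u :: 'a mpoly) = 0" by (rule dd_sym)
      moreover have "U \<noteq> insert 1 {4..l+2}"
      proof
        assume "U = insert 1 {4..l+2}"
        then have "U - {4..l+2} = {1}" by auto
        then show False using W False by auto
      qed
      ultimately show ?thesis using d by (simp add: Lf_def)
    qed
  qed
qed

lemma Lf_esym_T:
  assumes l: "2 \<le> l" "l + 2 \<le> n"
  shows "Lf l (esym l ({1..n} - {2,3})) = ((- 1) ^ (l - 1) :: 'a::field)"
proof -
  let ?T = "{1..n} - {2,3}"
  let ?X = "{U. U \<subseteq> ?T \<and> card U = l}"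
  let ?U0 = "insert 1 {4..l+2}"
  have fX: "finite ?X" by (rule finite_subset[of _ "Pow ?T"]) auto
  have U0X: "?U0 \<in> ?X"
  proof -
    have "?U0 \<subseteq> ?T" using l by auto
    moreover have "card ?U0 = l" using l by simp
    ultimately show ?thesis by blast
  qed
  have "Lf l (esym l ?T :: 'a mpoly) = (\<Sum>U\<in>?X. Lf l (\<Prod>k\<in>U. var k :: 'a mpoly))"
    unfolding esym_def by (rule Lf_sum[OF fX])
  also have "\<dots> = (\<Sum>U\<in>?X. if U = ?U0 then (- 1) ^ (l - 1) else 0)"
  proof (rule sum.cong[OF refl])
    fix U assume "U \<in> ?X"
    then have "U \<subseteq> ?T" "card U = l" by auto
    then show "Lf l (\<Prod>k\<in>U. var k :: 'a mpoly) = (if U = ?U0 then (- 1) ^ (l - 1) else 0)"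
      by (rule Lf_prod_U[OF l])
  qed
  also have "\<dots> = (- 1) ^ (l - 1)" using fX U0X by simp
  finally show ?thesis .
qed



lemma Lf_ideal:
  assumes l: "2 \<le> l" "l + 2 \<le> n"
    and cls: "\<And>r S. S \<subseteq> {1..n} \<Longrightarrow> 1 \<le> card S \<Longrightarrow> r \<le> card S \<Longrightarrow> card S < r + dk n mu (card S) \<Longrightarrow>
        (S = {1..n} \<and> 1 \<le> r) \<or> (card S = n - 1 \<and> r = l) \<or> l + 1 \<le> r"
    and f: "f \<in> (tanisaki_ideal n mu :: 'a::field mpoly set)"
  shows "Lf l f = 0"
proof -
  obtain H c where H: "finite H" "H \<subseteq> tanisaki_gens n mu" "f = (\<Sum>g\<in>H. c g * g)"
    using f unfolding tanisaki_ideal_def ideal_in_def by blast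
  have "Lf l (c g * g) = 0" if "g \<in> H" for g
  proof -
    have "g \<in> tanisaki_gens n mu" using that H(2) by blast
    then obtain r S where gS: "g = esym r S" and S: "S \<subseteq> {1..n}" "1 \<le> card S" "r \<le> card S" "card S < r + dk n mu (card S)"
      unfolding tanisaki_gens_def by blast
    have fS: "finite S" using S(1) finite_subset by blast
    from cls[OF S] consider "S = {1..n}" "1 \<le> r" | "card S = n - 1" "r = l" | "l + 1 \<le> r" by blast
    then show ?thesis
    proof cases
      case 1 then show ?thesis using gS l Lf_full_esym[of r l n "c g"] by simp
    next
      case 2
      have "S \<noteq> {1..n}" using 2 l by auto
      then obtain j where j: "j \<in> {1..n}" "j \<notin> S" using S(1) by blast
      have "S \<subseteq> {1..n} - {j}" using S(1) j by auto
      moreover have "card ({1..n} - {j}) = card S" using 2 j by simp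
      ultimately have "S = {1..n} - {j}" by (intro card_subset_eq) auto
      then show ?thesis using gS 2 l j Lf_esym_del[of l n j "c g"] by simp
    next
      case 3 then show ?thesis using gS fS l Lf_big_esym[of S l r "c g"] by simp
    qed
  qed
  then show ?thesis using H by (simp add: Lf_sum)
qed

lemma demazure_witness:
  assumes n: "4 \<le> n" and l: "1 \<le> l"
  shows "demazure 2 (esym l ({1..n} - {2})) = (esym l ({1..n} - {2, 3}) :: 'a::field mpoly)"
proof -
  let ?A = "{1..n} - {2, 3}"
  have fA: "finite ?A" by simp
  have A3: "3 \<notin> ?A" "2 \<notin> ?A" by auto
  have S: "{1..n} - {2} = insert 3 ?A" using n by auto
  have e1: "esym l ({1..n} - {2}) = esym l ?A + var 3 * (esym (l - 1) ?A :: 'a mpoly)"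
    unfolding S by (rule esym_insert[OF fA A3(1) l])
  have img: "swap_idx 2 (Suc 2) ` insert 3 ?A = insert 2 ?A"
    using swap_image_same[of 2 ?A] A3 by (simp add: numeral_3_eq_3 numeral_2_eq_2)
  have e2: "swap_var 2 (esym l ({1..n} - {2})) = esym l ?A + var 2 * (esym (l - 1) ?A :: 'a mpoly)"
    unfolding S swap_var_esym img by (rule esym_insert[OF fA A3(2) l])
  have "dd 2 (esym l ({1..n} - {2})) = - (esym (l - 1) ?A :: 'a mpoly)"
  proof (rule dd_unique)
    show "(var 2 - var (Suc 2)) * - esym (l - 1) ?A = esym l ({1..n} - {2}) - swap_var 2 (esym l ({1..n} - {2}) :: 'a mpoly)"
      unfolding e2 by (subst e1) (simp add: algebra_simps numeral_3_eq_3 numeral_2_eq_2)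
  qed
  then show ?thesis unfolding demazure_eq
    by (subst e1) (simp add: numeral_3_eq_3 numeral_2_eq_2)
qed

lemma nonhook_contra:
  assumes l: "2 \<le> l" "l + 2 \<le> n"
    and cls: "\<And>r S. S \<subseteq> {1..n} \<Longrightarrow> 1 \<le> card S \<Longrightarrow> r \<le> card S \<Longrightarrow> card S < r + dk n mu (card S) \<Longrightarrow>
        (S = {1..n} \<and> 1 \<le> r) \<or> (card S = n - 1 \<and> r = l) \<or> l + 1 \<le> r"
    and wit: "n - 1 < l + dk n mu (n - 1)"
    and inv: "demazure 2 ` (tanisaki_ideal n mu :: 'a::field mpoly set) \<subseteq> tanisaki_ideal n mu"
  shows False
proof -
  have "esym l ({1..n} - {2}) \<in> (tanisaki_ideal n mu :: 'a mpoly set)"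
    by (rule gen_I) (use l wit in auto)
  then have "demazure 2 (esym l ({1..n} - {2})) \<in> (tanisaki_ideal n mu :: 'a mpoly set)" using inv by blast
  moreover have w: "demazure 2 (esym l ({1..n} - {2})) = (esym l ({1..n} - {2, 3}) :: 'a mpoly)"
    by (rule demazure_witness) (use l in auto)
  ultimately have "esym l ({1..n} - {2, 3}) \<in> (tanisaki_ideal n mu :: 'a mpoly set)"
    by simp
  then have "Lf l (esym l ({1..n} - {2, 3}) :: 'a mpoly) = 0" using Lf_ideal[OF l] cls by blast
  then show False using Lf_esym_T[OF l, where 'a='a] by simp
qed



lemma conj_part_alt: "conj_part n mu j = card {i\<in>{0..<n}. n + 1 - j \<le> mu ! i}"
proof -
  have "{i \<in> {1..n}. n + 1 - j \<le> mu ! (i - 1)} = Suc ` {i\<in>{0..<n}. n + 1 - j \<le> mu ! i}"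
  proof (intro set_eqI iffI)
    fix x assume "x \<in> {i \<in> {1..n}. n + 1 - j \<le> mu ! (i - 1)}"
    then have x: "1 \<le> x" "x \<le> n" "n + 1 - j \<le> mu ! (x - 1)" by auto
    then have "x = Suc (x - 1)" "x - 1 \<in> {i\<in>{0..<n}. n + 1 - j \<le> mu ! i}" by auto
    then show "x \<in> Suc ` {i\<in>{0..<n}. n + 1 - j \<le> mu ! i}" by (metis image_eqI)
  next
    fix x assume "x \<in> Suc ` {i\<in>{0..<n}. n + 1 - j \<le> mu ! i}"
    then obtain i where "x = Suc i" "i < n" "n + 1 - j \<le> mu ! i" by auto
    then show "x \<in> {i \<in> {1..n}. n + 1 - j \<le> mu ! (i - 1)}" by auto
  qed
  then show ?thesis unfolding conj_part_def by (simp add: card_image)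
qed

lemma card_filter_sum: "finite A \<Longrightarrow> card {x\<in>A. P x} = (\<Sum>x\<in>A. if P x then 1 else (0::nat))"
  by (simp add: sum.If_cases Int_def)

lemma cnt_lemma:
  assumes "a \<le> n" "k \<le> n"
  shows "card {j\<in>{1..k}. n + 1 - j \<le> a} = a + k - n"
proof (cases "a = 0")
  case True
  then have "{j\<in>{1..k}. n + 1 - j \<le> a} = {}" using assms by auto
  then show ?thesis using True assms by simp
next
  case False
  then have "{j\<in>{1..k}. n + 1 - j \<le> a} = {n + 1 - a..k}" using assms by auto
  then show ?thesis using assms by simp
qed

lemma dk_formula:
  assumes P: "is_partition n mu" and k: "k \<le> n"
  shows "dk n mu k = (\<Sum>i<n. mu ! i + k - n)"
proof -
  have le: "mu ! i \<le> n" if "i < n" for i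
    using P that elem_le_sum_list[of i mu] unfolding is_partition_def by simp
  have "dk n mu k = (\<Sum>j\<in>{1..k}. \<Sum>i<n. if n + 1 - j \<le> mu ! i then 1 else (0::nat))"
    unfolding dk_def conj_part_alt lessThan_atLeast0
    by (intro sum.cong refl, subst card_filter_sum) auto
  also have "\<dots> = (\<Sum>i<n. \<Sum>j\<in>{1..k}. if n + 1 - j \<le> mu ! i then 1 else (0::nat))"
    by (rule sum.swap)
  also have "\<dots> = (\<Sum>i<n. card {j\<in>{1..k}. n + 1 - j \<le> mu ! i})"
    by (intro sum.cong refl, subst card_filter_sum) auto
  also have "\<dots> = (\<Sum>i<n. mu ! i + k - n)"
    using le k by (intro sum.cong refl cnt_lemma) auto
  finally show ?thesis .
qed

lemma part_sum: "is_partition n mu \<Longrightarrow> (\<Sum>i<n. mu ! i) = n"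
  unfolding is_partition_def by (auto simp: sum_list_sum_nth lessThan_atLeast0)

lemma dk_n: "is_partition n mu \<Longrightarrow> dk n mu n = n"
  using dk_formula[of n mu n] part_sum[of n mu] by simp

lemma conj_part_n: "conj_part n mu n = card {i\<in>{0..<n}. 1 \<le> mu ! i}"
  unfolding conj_part_alt by simp



lemma hook_Hc:
  assumes P: "is_partition n mu" and Hk: "is_hook n mu"
  shows "\<forall>k. 1 \<le> k \<longrightarrow> k < n \<longrightarrow> conj_part n mu k \<le> 1"
proof (intro allI impI)
  fix k assume k: "1 \<le> k" "k < n"
  obtain h where h: "1 \<le> h" "h \<le> n" "mu = replicate (n - h) 0 @ replicate (h - 1) 1 @ [n - h + 1]"
    using Hk unfolding is_hook_def by blast
  define xs :: "nat list" where "xs = replicate (n - h) 0 @ replicate (h - 1) 1"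
  have mu: "mu = xs @ [n - h + 1]" using h(3) by (simp add: xs_def)
  have lxs: "length xs = n - 1" using h by (simp add: xs_def)
  have small: "mu ! i \<le> 1" if "i < n - 1" for i
  proof -
    have "mu ! i = xs ! i" using that lxs by (simp add: mu nth_append)
    moreover have "xs ! i \<in> set xs" using that lxs by simp
    moreover have "set xs \<subseteq> {0, 1}" by (auto simp: xs_def)
    ultimately show ?thesis by auto
  qed
  have "{i\<in>{0..<n}. n + 1 - k \<le> mu ! i} \<subseteq> {n - 1}"
  proof
    fix i assume i: "i \<in> {i\<in>{0..<n}. n + 1 - k \<le> mu ! i}"
    show "i \<in> {n - 1}"
    proof (rule ccontr)
      assume "i \<notin> {n - 1}"
      then have "i < n - 1" using i by auto
      then have "mu ! i \<le> 1" by (rule small)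
      then show False using i k by auto
    qed
  qed
  then have "card {i\<in>{0..<n}. n + 1 - k \<le> mu ! i} \<le> card {n - 1}" by (intro card_mono) auto
  then show "conj_part n mu k \<le> 1" unfolding conj_part_alt by simp
qed

lemma make_hook:
  assumes P: "is_partition n mu" and n: "1 \<le> n" and small: "\<And>i. i < n - 1 \<Longrightarrow> mu ! i \<le> 1"
  shows "is_hook n mu"
proof -
  have len: "length mu = n" and srt: "sorted mu" using P unfolding is_partition_def by auto
  define z where "z = (LEAST i. n - 1 \<le> i \<or> mu ! i \<noteq> 0)"
  have Hz: "n - 1 \<le> z \<or> mu ! z \<noteq> 0" unfolding z_def by (rule LeastI[of _ "n - 1"]) simp
  have zle: "z \<le> n - 1" unfolding z_def by (rule Least_le) simp
  have below: "mu ! i = 0" if "i < z" for i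
    using not_less_Least[OF that[unfolded z_def]] by (simp add: z_def)
  have above: "mu ! i = 1" if "z \<le> i" "i < n - 1" for i
  proof -
    have "mu ! z \<noteq> 0" using Hz that by auto
    moreover have "mu ! z \<le> mu ! i" using srt that len by (intro sorted_nth_mono) auto
    ultimately show ?thesis using small[OF that(2)] by simp
  qed
  have "(\<Sum>i<n - 1. mu ! i) = (\<Sum>i<n - 1. if i < z then 0 else 1)"
    using below above by (intro sum.cong) auto
  also have "\<dots> = card {i\<in>{..<n - 1}. \<not> i < z}"
    by (simp add: sum.If_cases Int_def)
  also have "{i\<in>{..<n - 1}. \<not> i < z} = {z..<n - 1}" by auto
  finally have s1: "(\<Sum>i<n - 1. mu ! i) = n - 1 - z" by simp
  have "(\<Sum>i<n. mu ! i) = (\<Sum>i<n - 1. mu ! i) + mu ! (n - 1)"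
  proof -
    obtain m where m: "n = Suc m" using n by (cases n) auto
    show ?thesis by (simp add: m)
  qed
  then have last: "mu ! (n - 1) = z + 1" using part_sum[OF P] s1 zle n by simp
  define h where "h = n - z"
  have h: "1 \<le> h" "h \<le> n" using zle n by (auto simp: h_def)
  have "mu = replicate (n - h) 0 @ replicate (h - 1) 1 @ [n - h + 1]"
  proof (rule nth_equalityI)
    show "length mu = length (replicate (n - h) 0 @ replicate (h - 1) 1 @ [n - h + 1])"
      using len h by simp
  next
    fix i assume "i < length mu"
    then have i: "i < n" using len by simp
    have nh: "n - h = z" "h - 1 = n - 1 - z" "h - Suc 0 = n - Suc 0 - z" using zle n by (auto simp: h_def)
    show "mu ! i = (replicate (n - h) 0 @ replicate (h - 1) 1 @ [n - h + 1]) ! i"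
    proof (cases "i < z")
      case True then show ?thesis using below by (simp add: nh nth_append)
    next
      case False
      show ?thesis
      proof (cases "i < n - 1")
        case True
        then have "i - z < n - Suc z" using False by arith
        then show ?thesis using above False zle True by (simp add: nh nth_append)
      next
        case False2: False
        then have "i = n - 1" using i by simp
        then show ?thesis using last zle n False by (simp add: nh nth_append)
      qed
    qed
  qed
  then show ?thesis unfolding is_hook_def using h by blast
qed

lemma not_hook:
  assumes P: "is_partition n mu" and n: "1 \<le> n" and nh: "\<not> is_hook n mu"
  shows "2 \<le> n \<and> 2 \<le> mu ! (n - 2)"
proof (rule ccontr)
  assume A: "\<not> (2 \<le> n \<and> 2 \<le> mu ! (n - 2))"
  have len: "length mu = n" and srt: "sorted mu" using P unfolding is_partition_def by auto
  have "mu ! i \<le> 1" if "i < n - 1" for i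
  proof -
    have "2 \<le> n" using that by simp
    then have "mu ! (n - 2) \<le> 1" using A by simp
    moreover have "mu ! i \<le> mu ! (n - 2)" using srt that len by (intro sorted_nth_mono) auto
    ultimately show ?thesis by simp
  qed
  then have "is_hook n mu" using make_hook[OF P n] by blast
  then show False using nh by simp
qed



lemma sum_ind_l: "(\<Sum>i<n. if 1 \<le> mu ! i then 1 else (0::nat)) = conj_part n mu n"
  unfolding conj_part_n lessThan_atLeast0 by (subst card_filter_sum) auto

lemma nh_basic:
  assumes P: "is_partition n mu" and n: "2 \<le> n" and a: "2 \<le> mu ! (n - 2)"
  shows "2 \<le> conj_part n mu n" "conj_part n mu n + 2 \<le> n"
proof -
  have len: "length mu = n" and srt: "sorted mu" using P unfolding is_partition_def by auto
  have big: "2 \<le> mu ! i" if "n - 2 \<le> i" "i < n" for i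
    using a sorted_nth_mono[OF srt that(1)] that len by simp
  have b1: "2 \<le> mu ! (n - 2)" "2 \<le> mu ! (n - 1)" using big n by auto
  have "{n - 2, n - 1} \<subseteq> {i\<in>{0..<n}. 1 \<le> mu ! i}" using b1 n by auto
  then have "card {n - 2, n - 1} \<le> card {i\<in>{0..<n}. 1 \<le> mu ! i}" by (intro card_mono) auto
  then show "2 \<le> conj_part n mu n" using n unfolding conj_part_n by simp
  have "(\<Sum>i<n. (if 1 \<le> mu ! i then 1 else 0) + (if n - 2 \<le> i then 1 else (0::nat))) \<le> (\<Sum>i<n. mu ! i)"
  proof (rule sum_mono)
    fix i assume i: "i \<in> {..<n}"
    show "(if 1 \<le> mu ! i then 1 else 0) + (if n - 2 \<le> i then 1 else (0::nat)) \<le> mu ! i"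
    proof (cases "n - 2 \<le> i")
      case True
      then have "2 \<le> mu ! i" using big i by simp
      then show ?thesis using True by simp
    next
      case False then show ?thesis by simp
    qed
  qed
  moreover have "(\<Sum>i<n. if n - 2 \<le> i then 1 else (0::nat)) = 2"
  proof -
    have "(\<Sum>i<n. if n - 2 \<le> i then 1 else (0::nat)) = card {i\<in>{..<n}. n - 2 \<le> i}"
      by (subst card_filter_sum) auto
    also have "{i\<in>{..<n}. n - 2 \<le> i} = {n - 2..<n}" by auto
    finally show ?thesis using n by simp
  qed
  ultimately show "conj_part n mu n + 2 \<le> n" using part_sum[OF P] sum_ind_l[where n=n and mu=mu] by (simp add: sum.distrib)
qed

lemma dk_prev: "is_partition n mu \<Longrightarrow> 1 \<le> n \<Longrightarrow> dk n mu (n - 1) + conj_part n mu n = n"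
proof -
  assume P: "is_partition n mu" and n: "1 \<le> n"
  obtain m where m: "n = Suc m" using n by (cases n) auto
  have "dk n mu (Suc m) = dk n mu m + conj_part n mu (Suc m)" by (simp add: dk_def)
  then show ?thesis using dk_n[OF P] m by simp
qed

lemma nh_claim:
  assumes P: "is_partition n mu" and n: "2 \<le> n" and a: "2 \<le> mu ! (n - 2)"
    and k: "k + 2 \<le> n"
  shows "dk n mu k = 0 \<or> dk n mu k + conj_part n mu n \<le> k"
proof (cases "dk n mu k = 0")
  case False
  have len: "length mu = n" and srt: "sorted mu" using P unfolding is_partition_def by auto
  define c where "c = n - k"
  have c2: "2 \<le> c" using k by (simp add: c_def)
  have dkf: "dk n mu k = (\<Sum>i<n. mu ! i + k - n)" using dk_formula[OF P] k by simp
  obtain i where i: "i < n" "mu ! i + k - n \<noteq> 0" using False dkf by (metis (no_types, lifting) sum.neutral lessThan_iff)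
  have "mu ! i \<le> mu ! (n - 1)" using srt i len by (intro sorted_nth_mono) auto
  moreover have "n < mu ! i + k" using i(2) by simp
  ultimately have top: "c < mu ! (n - 1)" unfolding c_def using k by arith
  have big: "2 \<le> mu ! (n - 2)" using a .
  have pw: "mu ! j = (mu ! j + k - n) + min (mu ! j) c" for j using k by (simp add: c_def)
  have "n = (\<Sum>j<n. (mu ! j + k - n) + min (mu ! j) c)" using part_sum[OF P] pw by simp
  also have "\<dots> = dk n mu k + (\<Sum>j<n. min (mu ! j) c)" by (simp add: sum.distrib dkf)
  finally have nsum: "n = dk n mu k + (\<Sum>j<n. min (mu ! j) c)" .
  have "(\<Sum>j<n. (if 1 \<le> mu ! j then 1 else 0) + (if j = n - 2 then 1 else 0) + (if j = n - 1 then c - 1 else (0::nat)))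
      \<le> (\<Sum>j<n. min (mu ! j) c)"
  proof (rule sum_mono)
    fix j assume j: "j \<in> {..<n}"
    show "(if 1 \<le> mu ! j then 1 else 0) + (if j = n - 2 then 1 else 0) + (if j = n - 1 then c - 1 else 0) \<le> min (mu ! j) c"
      using top big c2 n by (cases "j = n - 1"; cases "j = n - 2") auto
  qed
  moreover have "(\<Sum>j<n. (if j = n - 2 then 1 else (0::nat))) = 1" using n by simp
  moreover have "(\<Sum>j<n. (if j = n - 1 then c - 1 else (0::nat))) = c - 1" using n by simp
  ultimately have "conj_part n mu n + 1 + (c - 1) \<le> (\<Sum>j<n. min (mu ! j) c)"
    using sum_ind_l[where n=n and mu=mu] by (simp add: sum.distrib)
  then have "dk n mu k + conj_part n mu n \<le> k" using nsum c2 k unfolding c_def by arith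
  then show ?thesis by simp
qed simp

lemma nh_cls:
  assumes P: "is_partition n mu" and n: "2 \<le> n" and a: "2 \<le> mu ! (n - 2)"
    and S: "S \<subseteq> {1..n}" "1 \<le> card S" "r \<le> card S" "card S < r + dk n mu (card S)"
  shows "(S = {1..n} \<and> 1 \<le> r) \<or> (card S = n - 1 \<and> r = conj_part n mu n) \<or> conj_part n mu n + 1 \<le> r"
proof -
  let ?l = "conj_part n mu n"
  have kn: "card S \<le> n" using card_mono[OF _ S(1)] by simp
  have lb: "?l + 2 \<le> n" using nh_basic[OF P n a] by simp
  consider "card S = n" | "card S = n - 1" | "card S + 2 \<le> n" using kn by linarith
  then show ?thesis
  proof cases
    case 1
    then have "S = {1..n}" using S(1) by (intro card_subset_eq) auto
    moreover have "1 \<le> r" using S(4) 1 dk_n[OF P] by simp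
    ultimately show ?thesis by simp
  next
    case 2
    have "dk n mu (n - 1) + ?l = n" using dk_prev[OF P] n by simp
    then have "?l \<le> r" using S(4) 2 lb by simp
    then show ?thesis using 2 by auto
  next
    case 3
    from nh_claim[OF P n a 3] show ?thesis using S(3,4) by auto
  qed
qed

lemma nh_wit:
  assumes P: "is_partition n mu" and n: "2 \<le> n" and a: "2 \<le> mu ! (n - 2)"
  shows "n - 1 < conj_part n mu n + dk n mu (n - 1)"
  using dk_prev[OF P] n nh_basic[OF P n a] by simp



theorem proposition8p2:
  fixes n :: nat and mu :: "nat list"
  assumes "1 \<le> n" and "is_partition n mu"
  shows "(\<forall>i \<in> {1..<n}. demazure i ` (tanisaki_ideal n mu :: 'a::field mpoly set)
              \<subseteq> tanisaki_ideal n mu) \<longleftrightarrow> is_hook n mu"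
proof
  assume inv: "\<forall>i \<in> {1..<n}. demazure i ` (tanisaki_ideal n mu :: 'a::field mpoly set) \<subseteq> tanisaki_ideal n mu"
  show "is_hook n mu"
  proof (rule ccontr)
    assume nh: "\<not> is_hook n mu"
    from not_hook[OF assms(2) assms(1) nh] have n2: "2 \<le> n" and a: "2 \<le> mu ! (n - 2)" by auto
    have l: "2 \<le> conj_part n mu n" "conj_part n mu n + 2 \<le> n" using nh_basic[OF assms(2) n2 a] by auto
    have inv2: "demazure 2 ` (tanisaki_ideal n mu :: 'a mpoly set) \<subseteq> tanisaki_ideal n mu"
      using inv l by auto
    show False
      by (rule nonhook_contra[OF l _ nh_wit[OF assms(2) n2 a] inv2])
         (rule nh_cls[OF assms(2) n2 a], assumption+)
  qed
next
  assume hk: "is_hook n mu"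
  have Hc: "\<forall>k. 1 \<le> k \<longrightarrow> k < n \<longrightarrow> conj_part n mu k \<le> 1" by (rule hook_Hc[OF assms(2) hk])
  show "\<forall>i \<in> {1..<n}. demazure i ` (tanisaki_ideal n mu :: 'a::field mpoly set) \<subseteq> tanisaki_ideal n mu"
  proof (intro ballI subsetI)
    fix i x assume i: "i \<in> {1..<n}" and x: "x \<in> demazure i ` (tanisaki_ideal n mu :: 'a mpoly set)"
    then obtain f where f: "f \<in> (tanisaki_ideal n mu :: 'a mpoly set)" "x = demazure i f" by blast
    have "1 \<le> i" "Suc i \<le> n" using i by auto
    then show "x \<in> tanisaki_ideal n mu" using hook_direction[OF Hc _ _ f(1)] f(2) by blast
  qed
qed


end
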